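(* Let $\mathcal{F}_a$ be a nonempty class of functions $\{1,2,\dots\}\to\mathbb{R}_+$ that either satisfies (KU1), or satisfies (KU2a) and (KU2b). Realize the sample as $X_i=\exp(G^{-1}(1-U_i))$ with $U_1,U_2,\dots$ i.i.d. uniform on $(0,1)$, so that $\log X_{n-j+1,n}=G^{-1}(1-U_{j,n})$, and set $V_n(f)=\sum_{j=1}^{k}f(j)\log(U_{j+1,n}/U_{j,n})$ and $V_n^*(f)=\sigma_n(f)^{-1}(V_n(f)-a_n(f))$. Suppose that $\{V_n^*(f),f\in\mathcal{F}_a\}$ converges weakly in $\ell^\infty(\mathcal{F}_a)$. Then: if $F\in D(\Lambda)$ and (CU3) holds on $\mathcal{F}_a$ for some $\lambda>1$, $$\sup_{f\in\mathcal{F}_a}\Big|(s(k/n)\sigma_n(f))^{-1}\big(T_n(f)-a_n(f)s(k/n)\big)-V_n^*(f)\Big|\to0$$ in outer probability; and if $F\in D(\phi_{1/\gamma})$, $\gamma>0$, and (CU1), (CU2) hold on $\mathcal{F}_a$ for some $\lambda>1$, $$\sup_{f\in\mathcal{F}_a}\Big|\frac{a_n(f)}{\sigma_n(f)}\Big(\frac{T_n(f)}{a_n(f)}-\gamma\Big)-\gamma V_n^*(f)\Big|\to0$$ in outer probability.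
   Context: $X>1$ is a random variable with distribution function $F$, $G(x)=F(e^x)$ is the distribution function of $\log X$, $G^{-1}(v)=\inf\{x:G(x)\ge v\}$; $X_{1,n}\le\dots\le X_{n,n}$ and $U_{1,n}\le\dots\le U_{n,n}$ are order statistics of $X_1,\dots,X_n$ and $U_1,\dots,U_n$, with $U_{n+1,n}:=1$. $k=k(n)$ are integers, $1\le k\le n$, $k\to\infty$, $k/n\to0$. For $f:\{1,2,\dots\}\to\mathbb{R}_+$: $T_n(f)=\sum_{j=1}^{k}f(j)(\log X_{n-j+1,n}-\log X_{n-j,n})$, $a_n(f)=\sum_{j=1}^kf(j)j^{-1}$, $\sigma_n^2(f)=\sum_{j=1}^kf(j)^2j^{-2}$, $A(2,f)=\sum_{j\ge1}f(j)^2j^{-2}$, $B_n(f)=\sigma_n(f)^{-1}\max_{1\le j\le k}f(j)j^{-1}$. (KU1): $0<\inf_{f\in\mathcal{F}_a}A(2,f)<\sup_{f\in\mathcal{F}_a}A(2,f)<\infty$. (KU2a): $\lim_n\sup_{f\in\mathcal{F}_a}B_n(f)=0$. (KU2b): for all $f_1,f_2\in\mathcal{F}_a$, $\lim_n(\sigma_n(f_1)\sigma_n(f_2))^{-1}\sum_{j=1}^kf_1(j)f_2(j)j^{-2}$ exists. $F\in D(\Lambda)$: $F^n(a_nx+b_n)\to\exp(-e^{-x})$ for some $a_n>0,b_n$; $F\in D(\phi_{1/\gamma})$: $F^n(a_nx+b_n)\to\exp(-x^{-1/\gamma})\mathbb{I}_{x>0}$. Representations: if $F\in D(\phi_{1/\gamma})$,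 $G^{-1}(1-u)=\log c+\log(1+p(u))-\gamma\log u+\int_u^1b(t)t^{-1}dt$; if $F\in D(\Lambda)$, $G^{-1}(1-u)=d-s(u)+\int_u^1s(t)t^{-1}dt$, $s(u)=c(1+p(u))\exp(\int_u^1b(t)t^{-1}dt)$; $0<u<1$, $c>0$, $d\in\mathbb{R}$, $p(u),b(u)\to0$ as $u\to0$. $g_{1,n}(p,\lambda)=\sup_{0<u\le\lambda k/n}|p(u)|$, $g_{2,n}(b,\lambda)=\sup_{0<u\le\lambda k/n}|b(u)|$, $d_n(p,b,\lambda)=\max(g_{1,n}(p,\lambda),g_{2,n}(b,\lambda)\log k)$. (CU1): $\sup_{f\in\mathcal{F}_a}g_{1,n}(p,\lambda)\sigma_n(f)^{-1}\sum_{j=1}^kf(j)\to0$; (CU2): $\sup_{f\in\mathcal{F}_a}g_{2,n}(b,\lambda)\sigma_n(f)^{-1}\sum_{j=1}^kf(j)\to0$; (CU3): $\sup_{f\in\mathcal{F}_a}d_n(p,b,\lambda)\sigma_n(f)^{-1}\sum_{j=1}^kf(j)\to0$. *)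

theory Defs
  imports "HOL-Probability.Probability"
begin

definition linf :: "'i set \<Rightarrow> ('i \<Rightarrow> real) set" where
  "linf I = {z. bounded (z ` I) \<and> (\<forall>i. i \<notin> I \<longrightarrow> z i = 0)}"

definition supdist :: "'i set \<Rightarrow> ('i \<Rightarrow> real) \<Rightarrow> ('i \<Rightarrow> real) \<Rightarrow> real" where
  "supdist I z w = (SUP i\<in>I. \<bar>z i - w i\<bar>)"

definition linf_open :: "'i set \<Rightarrow> ('i \<Rightarrow> real) set \<Rightarrow> bool" where
  "linf_open I S \<longleftrightarrow> S \<subseteq> linf I \<and>
     (\<forall>z\<in>S. \<exists>e>0. \<forall>w\<in>linf I. supdist I z w < e \<longrightarrow> w \<in> S)"

definition linf_bcont :: "'i set \<Rightarrow> (('i \<Rightarrow> real) \<Rightarrow> real) \<Rightarrow> bool" where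
  "linf_bcont I h \<longleftrightarrow> bounded (h ` linf I) \<and>
     (\<forall>z\<in>linf I. \<forall>e>0. \<exists>d>0. \<forall>w\<in>linf I. supdist I z w < d \<longrightarrow> \<bar>h w - h z\<bar> < e)"

definition outer_exp :: "'a measure \<Rightarrow> ('a \<Rightarrow> real) \<Rightarrow> real" where
  "outer_exp M T = Inf {integral\<^sup>L M V | V. V \<in> borel_measurable M \<and> integrable M V \<and>
                          (\<forall>\<omega>\<in>space M. T \<omega> \<le> V \<omega>)}"

definition outer_prob :: "'a measure \<Rightarrow> 'a set \<Rightarrow> real" where
  "outer_prob M A = Inf {measure M B | B. B \<in> sets M \<and> A \<subseteq> B}"

definition weak_conv_linf :: "'a measure \<Rightarrow> 'i set \<Rightarrow> (nat \<Rightarrow> 'a \<Rightarrow> ('i \<Rightarrow> real)) \<Rightarrow> bool" where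
  "weak_conv_linf M I X \<longleftrightarrow>
     (\<forall>\<^sub>F n in sequentially. \<forall>\<omega>\<in>space M. X n \<omega> \<in> linf I) \<and>
     (\<exists>L. prob_space L \<and> space L = linf I \<and> sets L = sigma_sets (linf I) {S. linf_open I S} \<and>
        (\<forall>h. linf_bcont I h \<longrightarrow>
           (\<lambda>n. outer_exp M (\<lambda>\<omega>. h (X n \<omega>))) \<longlonglongrightarrow> integral\<^sup>L L h))"

definition conv_outer_prob :: "'a measure \<Rightarrow> (nat \<Rightarrow> 'a \<Rightarrow> ereal) \<Rightarrow> bool" where
  "conv_outer_prob M Z \<longleftrightarrow>
     (\<forall>e>0. (\<lambda>n. outer_prob M {\<omega>\<in>space M. Z n \<omega> > ereal e}) \<longlonglongrightarrow> 0)"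

definition ostat :: "nat \<Rightarrow> (nat \<Rightarrow> real) \<Rightarrow> nat \<Rightarrow> real" where
  "ostat n x m = sort (map x [1..<n+1]) ! (m - 1)"

definition Uos :: "nat \<Rightarrow> (nat \<Rightarrow> real) \<Rightarrow> nat \<Rightarrow> real" where
  "Uos n u j = (if j = n + 1 then 1 else ostat n u j)"

definition Ginv :: "(real \<Rightarrow> real) \<Rightarrow> real \<Rightarrow> real" where
  "Ginv G v = Inf {x. G x \<ge> v}"

definition an :: "nat \<Rightarrow> (nat \<Rightarrow> real) \<Rightarrow> real" where
  "an k f = (\<Sum>j=1..k. f j / real j)"

definition sigman :: "nat \<Rightarrow> (nat \<Rightarrow> real) \<Rightarrow> real" where
  "sigman k f = sqrt (\<Sum>j=1..k. (f j)\<^sup>2 / (real j)\<^sup>2)"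

definition A2 :: "(nat \<Rightarrow> real) \<Rightarrow> real" where
  "A2 f = (\<Sum>j. (f (Suc j))\<^sup>2 / (real (Suc j))\<^sup>2)"

definition Bn :: "nat \<Rightarrow> (nat \<Rightarrow> real) \<Rightarrow> real" where
  "Bn k f = Max ((\<lambda>j. f j / real j) ` {1..k}) / sigman k f"

definition Tn :: "nat \<Rightarrow> nat \<Rightarrow> (nat \<Rightarrow> real) \<Rightarrow> (nat \<Rightarrow> real) \<Rightarrow> real" where
  "Tn k n x f = (\<Sum>j=1..k. f j * (ln (ostat n x (n - j + 1)) - ln (ostat n x (n - j))))"

definition Vn :: "nat \<Rightarrow> nat \<Rightarrow> (nat \<Rightarrow> real) \<Rightarrow> (nat \<Rightarrow> real) \<Rightarrow> real" where
  "Vn k n u f = (\<Sum>j=1..k. f j * ln (Uos n u (j + 1) / Uos n u j))"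

definition Vstar :: "nat \<Rightarrow> nat \<Rightarrow> (nat \<Rightarrow> real) \<Rightarrow> (nat \<Rightarrow> real) \<Rightarrow> real" where
  "Vstar k n u f = (Vn k n u f - an k f) / sigman k f"

definition Vproc :: "(nat \<Rightarrow> real) set \<Rightarrow> (nat \<Rightarrow> nat) \<Rightarrow> (nat \<Rightarrow> 'a \<Rightarrow> real) \<Rightarrow> nat \<Rightarrow> 'a \<Rightarrow> ((nat \<Rightarrow> real) \<Rightarrow> real)" where
  "Vproc Fa k U n \<omega> = (\<lambda>f. if f \<in> Fa then Vstar (k n) n (\<lambda>i. U i \<omega>) f else 0)"

definition Xsample :: "(real \<Rightarrow> real) \<Rightarrow> (nat \<Rightarrow> 'a \<Rightarrow> real) \<Rightarrow> 'a \<Rightarrow> nat \<Rightarrow> real" where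
  "Xsample F U \<omega> i = exp (Ginv (\<lambda>x. F (exp x)) (1 - U i \<omega>))"

definition KU1 :: "(nat \<Rightarrow> real) set \<Rightarrow> bool" where
  "KU1 Fa \<longleftrightarrow> (\<forall>f\<in>Fa. summable (\<lambda>j. (f (Suc j))\<^sup>2 / (real (Suc j))\<^sup>2)) \<and>
     bdd_above (A2 ` Fa) \<and> 0 < (INF f\<in>Fa. A2 f) \<and> (INF f\<in>Fa. A2 f) < (SUP f\<in>Fa. A2 f)"

definition KU2a :: "(nat \<Rightarrow> real) set \<Rightarrow> (nat \<Rightarrow> nat) \<Rightarrow> bool" where
  "KU2a Fa k \<longleftrightarrow> (\<lambda>n. SUP f\<in>Fa. ereal (Bn (k n) f)) \<longlonglongrightarrow> 0"

definition KU2b :: "(nat \<Rightarrow> real) set \<Rightarrow> (nat \<Rightarrow> nat) \<Rightarrow> bool" where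
  "KU2b Fa k \<longleftrightarrow> (\<forall>f1\<in>Fa. \<forall>f2\<in>Fa. convergent (\<lambda>n.
      (\<Sum>j=1..k n. f1 j * f2 j / (real j)\<^sup>2) / (sigman (k n) f1 * sigman (k n) f2)))"

definition domain_Gumbel :: "(real \<Rightarrow> real) \<Rightarrow> bool" where
  "domain_Gumbel F \<longleftrightarrow> (\<exists>a b :: nat \<Rightarrow> real. (\<forall>n. a n > 0) \<and>
     (\<forall>x. (\<lambda>n. (F (a n * x + b n)) ^ n) \<longlonglongrightarrow> exp (- exp (- x))))"

definition domain_Frechet :: "(real \<Rightarrow> real) \<Rightarrow> real \<Rightarrow> bool" where
  "domain_Frechet F \<gamma> \<longleftrightarrow> (\<exists>a b :: nat \<Rightarrow> real. (\<forall>n. a n > 0) \<and>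
     (\<forall>x. (\<lambda>n. (F (a n * x + b n)) ^ n) \<longlonglongrightarrow>
            (if x > 0 then exp (- (x powr (- 1 / \<gamma>))) else 0)))"

definition gumbel_s :: "real \<Rightarrow> (real \<Rightarrow> real) \<Rightarrow> (real \<Rightarrow> real) \<Rightarrow> real \<Rightarrow> real" where
  "gumbel_s c p b u = c * (1 + p u) * exp (integral {u..1} (\<lambda>t. b t / t))"

definition Gumbel_rep :: "(real \<Rightarrow> real) \<Rightarrow> real \<Rightarrow> real \<Rightarrow> (real \<Rightarrow> real) \<Rightarrow> (real \<Rightarrow> real) \<Rightarrow> bool" where
  "Gumbel_rep F c d p b \<longleftrightarrow> c > 0 \<and> (p \<longlongrightarrow> 0) (at_right 0) \<and> (b \<longlongrightarrow> 0) (at_right 0) \<and>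
     (\<forall>u\<in>{0<..<1}. (\<lambda>t. b t / t) integrable_on {u..1} \<and>
        (\<lambda>t. gumbel_s c p b t / t) integrable_on {u..1} \<and>
        Ginv (\<lambda>x. F (exp x)) (1 - u) =
          d - gumbel_s c p b u + integral {u..1} (\<lambda>t. gumbel_s c p b t / t))"

definition Frechet_rep :: "(real \<Rightarrow> real) \<Rightarrow> real \<Rightarrow> real \<Rightarrow> (real \<Rightarrow> real) \<Rightarrow> (real \<Rightarrow> real) \<Rightarrow> bool" where
  "Frechet_rep F \<gamma> c p b \<longleftrightarrow> c > 0 \<and> (p \<longlongrightarrow> 0) (at_right 0) \<and> (b \<longlongrightarrow> 0) (at_right 0) \<and>
     (\<forall>u\<in>{0<..<1}. (\<lambda>t. b t / t) integrable_on {u..1} \<and>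
        Ginv (\<lambda>x. F (exp x)) (1 - u) =
          ln c + ln (1 + p u) - \<gamma> * ln u + integral {u..1} (\<lambda>t. b t / t))"

definition g1n :: "(real \<Rightarrow> real) \<Rightarrow> (nat \<Rightarrow> nat) \<Rightarrow> real \<Rightarrow> nat \<Rightarrow> ereal" where
  "g1n p k lam n = (SUP u\<in>{0<..lam * real (k n) / real n}. ereal \<bar>p u\<bar>)"

definition g2n :: "(real \<Rightarrow> real) \<Rightarrow> (nat \<Rightarrow> nat) \<Rightarrow> real \<Rightarrow> nat \<Rightarrow> ereal" where
  "g2n b k lam n = (SUP u\<in>{0<..lam * real (k n) / real n}. ereal \<bar>b u\<bar>)"

definition dn :: "(real \<Rightarrow> real) \<Rightarrow> (real \<Rightarrow> real) \<Rightarrow> (nat \<Rightarrow> nat) \<Rightarrow> real \<Rightarrow> nat \<Rightarrow> ereal" where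
  "dn p b k lam n = max (g1n p k lam n) (g2n b k lam n * ereal (ln (real (k n))))"

definition CU :: "(nat \<Rightarrow> real) set \<Rightarrow> (nat \<Rightarrow> nat) \<Rightarrow> (nat \<Rightarrow> ereal) \<Rightarrow> bool" where
  "CU Fa k g \<longleftrightarrow> (\<lambda>n. SUP f\<in>Fa. g n * ereal ((\<Sum>j=1..k n. f j) / sigman (k n) f)) \<longlonglongrightarrow> 0"

definition CU1 :: "(nat \<Rightarrow> real) set \<Rightarrow> (nat \<Rightarrow> nat) \<Rightarrow> (real \<Rightarrow> real) \<Rightarrow> real \<Rightarrow> bool" where
  "CU1 Fa k p lam \<longleftrightarrow> CU Fa k (g1n p k lam)"

definition CU2 :: "(nat \<Rightarrow> real) set \<Rightarrow> (nat \<Rightarrow> nat) \<Rightarrow> (real \<Rightarrow> real) \<Rightarrow> real \<Rightarrow> bool" where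
  "CU2 Fa k b lam \<longleftrightarrow> CU Fa k (g2n b k lam)"

definition CU3 :: "(nat \<Rightarrow> real) set \<Rightarrow> (nat \<Rightarrow> nat) \<Rightarrow> (real \<Rightarrow> real) \<Rightarrow> (real \<Rightarrow> real) \<Rightarrow> real \<Rightarrow> bool" where
  "CU3 Fa k p b lam \<longleftrightarrow> CU Fa k (dn p b k lam)"

end

theory Submission
  imports Defs
begin


lemma outer_prob_le_measure:
  assumes "B \<in> sets M" "A \<subseteq> B"
  shows "outer_prob M A \<le> measure M B"
  unfolding outer_prob_def
  by (rule cInf_lower) (use assms in \<open>auto intro: bdd_belowI[where m=0]\<close>)

lemma outer_prob_nonneg: 
  assumes "A \<subseteq> space M"
  shows "outer_prob M A \<ge> 0"
  unfolding outer_prob_def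
  by (rule cInf_greatest) (use assms in auto)


lemma linf_bound: "z \<in> linf I \<Longrightarrow> \<exists>B. \<forall>i\<in>I. \<bar>z i\<bar> \<le> B"
  unfolding linf_def by (auto simp: bounded_iff)

lemma zero_linf: "(\<lambda>_. 0) \<in> linf I"
  unfolding linf_def by (auto simp: bounded_iff)

lemma linf_bdd: "z \<in> linf I \<Longrightarrow> w \<in> linf I \<Longrightarrow> bdd_above ((\<lambda>i. \<bar>z i - w i\<bar>) ` I)"
proof -
  assume "z \<in> linf I" "w \<in> linf I"
  then obtain B C where "\<forall>i\<in>I. \<bar>z i\<bar> \<le> B" "\<forall>i\<in>I. \<bar>w i\<bar> \<le> C" using linf_bound by blast
  then show ?thesis by (intro bdd_aboveI[where M="B+C"]) force
qed

lemma supdist_ge: "z \<in> linf I \<Longrightarrow> w \<in> linf I \<Longrightarrow> i \<in> I \<Longrightarrow> \<bar>z i - w i\<bar> \<le> supdist I z w"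
  unfolding supdist_def by (rule cSUP_upper) (auto intro: linf_bdd)

lemma supdist_sym: "supdist I z w = supdist I w z"
  unfolding supdist_def by (simp add: abs_minus_commute)

lemma supdist_tri:
  assumes "I \<noteq> {}" "z \<in> linf I" "w \<in> linf I" "v \<in> linf I"
  shows "supdist I z v \<le> supdist I z w + supdist I w v"
proof -
  have "\<And>i. i\<in>I \<Longrightarrow> \<bar>z i - v i\<bar> \<le> supdist I z w + supdist I w v"
  proof -
    fix i assume i: "i \<in> I"
    have "\<bar>z i - v i\<bar> \<le> \<bar>z i - w i\<bar> + \<bar>w i - v i\<bar>" by simp
    also have "\<dots> \<le> supdist I z w + supdist I w v"
      using supdist_ge[OF assms(2,3) i] supdist_ge[OF assms(3,4) i] by simp
    finally show "\<bar>z i - v i\<bar> \<le> supdist I z w + supdist I w v" .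
  qed
  then show ?thesis unfolding supdist_def[of I z v] using assms(1) by (intro cSUP_least) auto
qed

lemma nrm_lip:
  assumes "I \<noteq> {}" "z \<in> linf I" "w \<in> linf I"
  shows "\<bar>supdist I z (\<lambda>_. 0) - supdist I w (\<lambda>_. 0)\<bar> \<le> supdist I z w"
  using supdist_tri[OF assms(1,2,3) zero_linf] supdist_tri[OF assms(1,3,2) zero_linf] supdist_sym[of I z w]
  by linarith

definition hcut :: "'i set \<Rightarrow> real \<Rightarrow> ('i \<Rightarrow> real) \<Rightarrow> real" where
  "hcut I m z = min 1 (max 0 (supdist I z (\<lambda>_. 0) - m))"

lemma hcut_bcont: "I \<noteq> {} \<Longrightarrow> linf_bcont I (hcut I m)"
  unfolding linf_bcont_def
proof (intro conjI ballI allI impI)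
  show "bounded (hcut I m ` linf I)" unfolding hcut_def
    by (auto simp: bounded_iff intro!: exI[where x=1])
  fix z and e :: real assume I: "I \<noteq> {}" and z: "z \<in> linf I" and e: "0 < e"
  show "\<exists>d>0. \<forall>w\<in>linf I. supdist I z w < d \<longrightarrow> \<bar>hcut I m w - hcut I m z\<bar> < e"
  proof (intro exI[where x=e] conjI ballI impI)
    fix w assume w: "w \<in> linf I" "supdist I z w < e"
    have "\<bar>supdist I z (\<lambda>_. 0) - supdist I w (\<lambda>_. 0)\<bar> \<le> supdist I z w" by (rule nrm_lip[OF I z w(1)])
    then show "\<bar>hcut I m w - hcut I m z\<bar> < e" using w(2) unfolding hcut_def
      by (simp add: abs_if min_def max_def split: if_splits)
  qed (rule e)
qed

lemma bcont_meas:
  assumes "linf_bcont I h" "space L = linf I" "sets L = sigma_sets (linf I) {S. linf_open I S}"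
  shows "h \<in> borel_measurable L"
proof (rule borel_measurableI_greater)
  fix y :: real
  have "linf_open I {x\<in>linf I. y < h x}"
    unfolding linf_open_def
  proof (intro conjI ballI)
    fix z assume z: "z \<in> {x \<in> linf I. y < h x}"
    then obtain d where d: "d > 0" "\<forall>w\<in>linf I. supdist I z w < d \<longrightarrow> \<bar>h w - h z\<bar> < h z - y"
      using assms(1) unfolding linf_bcont_def by (metis (no_types, lifting) diff_gt_0_iff_gt mem_Collect_eq)
    then show "\<exists>e>0. \<forall>w\<in>linf I. supdist I z w < e \<longrightarrow> w \<in> {x \<in> linf I. y < h x}"
      by (intro exI[where x=d]) force
  qed auto
  then show "{x \<in> space L. y < h x} \<in> sets L" using assms(2,3) by (auto intro: sigma_sets.Basic)
qed

lemma outer_prob_le_outer_exp: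
  assumes P: "prob_space M" and h01: "\<And>\<omega>. \<omega>\<in>space M \<Longrightarrow> 0 \<le> g \<omega> \<and> g \<omega> \<le> 1"
    and A: "A \<subseteq> {\<omega>\<in>space M. g \<omega> = 1}"
  shows "outer_prob M A \<le> outer_exp M g"
  unfolding outer_exp_def
proof (rule cInf_greatest)
  show "{integral\<^sup>L M V |V. V \<in> borel_measurable M \<and> integrable M V \<and> (\<forall>\<omega>\<in>space M. g \<omega> \<le> V \<omega>)} \<noteq> {}"
    using h01 P by (auto intro!: exI[where x="\<lambda>_. 1"] finite_measure.integrable_const[OF prob_space.finite_measure])
  fix x assume "x \<in> {integral\<^sup>L M V |V. V \<in> borel_measurable M \<and> integrable M V \<and> (\<forall>\<omega>\<in>space M. g \<omega> \<le> V \<omega>)}"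
  then obtain V where V: "x = integral\<^sup>L M V" "V \<in> borel_measurable M" "integrable M V" "\<forall>\<omega>\<in>space M. g \<omega> \<le> V \<omega>"
    by blast
  have "outer_prob M A \<le> measure M {\<omega>\<in>space M. V \<omega> \<ge> 1}"
    apply (rule outer_prob_le_measure)
    using V(2) apply measurable
    using A V(4) by force
  also have "\<dots> \<le> integral\<^sup>L M V / 1"
    apply (rule integral_Markov_inequality_measure[where A="space M"])
    using V h01 by (auto intro!: AE_I2 order_trans[OF _ V(4)[rule_format]])
  finally show "outer_prob M A \<le> x" using V(1) by simp
qed

lemma tightness:
  assumes P: "prob_space M" and I: "Fa \<noteq> {}" and W: "weak_conv_linf M Fa X" and d: "\<delta> > 0"
  shows "\<exists>m::real. \<forall>\<^sub>F n in sequentially. outer_prob M {\<omega>\<in>space M. supdist Fa (X n \<omega>) (\<lambda>_. 0) > m + 1} < \<delta>"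
proof -
  obtain L where L: "prob_space L" "space L = linf Fa" "sets L = sigma_sets (linf Fa) {S. linf_open Fa S}"
    "\<And>h. linf_bcont Fa h \<Longrightarrow> (\<lambda>n. outer_exp M (\<lambda>\<omega>. h (X n \<omega>))) \<longlonglongrightarrow> integral\<^sup>L L h"
    using W unfolding weak_conv_linf_def by blast
  have ev: "\<forall>\<^sub>F n in sequentially. \<forall>\<omega>\<in>space M. X n \<omega> \<in> linf Fa"
    using W unfolding weak_conv_linf_def by blast
  have meas: "\<And>m. hcut Fa m \<in> borel_measurable L" using bcont_meas[OF hcut_bcont[OF I] L(2,3)] .
  have "(\<lambda>i. integral\<^sup>L L (hcut Fa (real i))) \<longlonglongrightarrow> integral\<^sup>L L (\<lambda>_. 0::real)"
  proof (rule integral_dominated_convergence[where w="\<lambda>_. 1"])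
    show "integrable L (\<lambda>_. 1::real)" using L(1) by (rule finite_measure.integrable_const[OF prob_space.finite_measure])
    show "AE x in L. (\<lambda>i. hcut Fa (real i) x) \<longlonglongrightarrow> 0"
    proof (rule AE_I2)
      fix z assume "z \<in> space L"
      obtain N :: nat where "supdist Fa z (\<lambda>_. 0) \<le> real N" using real_arch_simple by blast
      then have "\<forall>i\<ge>N. hcut Fa (real i) z = 0" unfolding hcut_def by auto
      then show "(\<lambda>i. hcut Fa (real i) z) \<longlonglongrightarrow> 0"
        by (intro tendsto_eventually) (auto simp: eventually_sequentially)
    qed
    show "\<And>i. AE x in L. norm (hcut Fa (real i) x) \<le> 1" unfolding hcut_def by auto
  qed (auto intro: meas)
  then have "(\<lambda>i. integral\<^sup>L L (hcut Fa (real i))) \<longlonglongrightarrow> 0" by simp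
  then obtain m :: nat where m: "integral\<^sup>L L (hcut Fa (real m)) < \<delta>"
    using d by (metis LIMSEQ_D abs_less_iff diff_zero order.refl real_norm_def)
  have "\<forall>\<^sub>F n in sequentially. outer_exp M (\<lambda>\<omega>. hcut Fa (real m) (X n \<omega>)) < \<delta>"
    using order_tendstoD(2)[OF L(4)[OF hcut_bcont[OF I]] m] .
  then have "\<forall>\<^sub>F n in sequentially. outer_prob M {\<omega>\<in>space M. supdist Fa (X n \<omega>) (\<lambda>_. 0) > real m + 1} < \<delta>"
  proof (eventually_elim)
    case (elim n)
    have "outer_prob M {\<omega>\<in>space M. supdist Fa (X n \<omega>) (\<lambda>_. 0) > real m + 1}
        \<le> outer_exp M (\<lambda>\<omega>. hcut Fa (real m) (X n \<omega>))"
      by (rule outer_prob_le_outer_exp[OF P]) (auto simp: hcut_def)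
    then show ?case using elim by linarith
  qed
  then show ?thesis by blast
qed


locale unifs = prob_space M for M :: "'a measure" +
  fixes U :: "nat \<Rightarrow> 'a \<Rightarrow> real"
  assumes indep: "indep_vars (\<lambda>_. borel) U {1..}"
    and unif: "\<forall>i\<ge>1. distr M borel (U i) = uniform_measure lborel {0<..<1}"
begin

lemma U_meas[measurable]: "i \<ge> 1 \<Longrightarrow> U i \<in> borel_measurable M"
  using indep unfolding indep_vars_def by auto

lemma prob_U:
  assumes i: "i \<ge> 1" and A: "A \<in> sets borel"
  shows "prob (U i -` A \<inter> space M) = measure lborel (A \<inter> {0<..<1})"
proof -
  have "prob (U i -` A \<inter> space M) = measure (distr M borel (U i)) A"
    using i A by (simp add: measure_distr)
  also have "\<dots> = measure (uniform_measure lborel {0<..<1}) A" using unif i by simp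
  also have "\<dots> = measure lborel (A \<inter> {0<..<1})"
    using A by (simp add: measure_def Int_commute divide_ennreal_def)
  finally show ?thesis .
qed

lemma prob_U_le:
  assumes i: "i \<ge> 1" and t: "0 \<le> t" "t \<le> 1"
  shows "prob {\<omega>\<in>space M. U i \<omega> \<le> t} = t"
proof -
  have "{\<omega>\<in>space M. U i \<omega> \<le> t} = U i -` {..t} \<inter> space M" by auto
  moreover have "{..t} \<inter> {0<..<1} = {0<..t} \<or> {..t} \<inter> {0<..<1} = {0<..<1} \<and> t = 1" using t by auto
  ultimately show ?thesis using prob_U[OF i, of "{..t}"] t by auto
qed

lemma prob_U_less:
  assumes i: "i \<ge> 1" and t: "0 \<le> t" "t \<le> 1"
  shows "prob {\<omega>\<in>space M. U i \<omega> < t} = t"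
proof -
  have "{\<omega>\<in>space M. U i \<omega> < t} = U i -` {..<t} \<inter> space M" by auto
  moreover have "{..<t} \<inter> {0<..<1} = {0<..<t}" using t by auto
  ultimately show ?thesis using prob_U[OF i, of "{..<t}"] t by auto
qed

lemma prob_U_out:
  assumes i: "i \<ge> 1"
  shows "prob {\<omega>\<in>space M. U i \<omega> \<notin> {0<..<1}} = 0"
proof -
  have "{\<omega>\<in>space M. U i \<omega> \<notin> {0<..<1}} = U i -` (- {0<..<1}) \<inter> space M" by auto
  then show ?thesis using prob_U[OF i, of "- {0<..<1}"] by simp
qed

lemma prob_U_pair:
  assumes i: "i \<ge> 1" and j: "j \<ge> 1" "i \<noteq> j"
  shows "prob ({\<omega>\<in>space M. U i \<omega> \<le> t} \<inter> {\<omega>\<in>space M. U j \<omega> \<le> t})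
       = prob {\<omega>\<in>space M. U i \<omega> \<le> t} * prob {\<omega>\<in>space M. U j \<omega> \<le> t}"
proof -
  have "prob (\<Inter>l\<in>{i,j}. U l -` {..t} \<inter> space M) = (\<Prod>l\<in>{i,j}. prob (U l -` {..t} \<inter> space M))"
    by (rule indep_varsD[OF indep]) (use i j in auto)
  moreover have "(\<Inter>l\<in>{i,j}. U l -` {..t} \<inter> space M) = {\<omega>\<in>space M. U i \<omega> \<le> t} \<inter> {\<omega>\<in>space M. U j \<omega> \<le> t}"
    by auto
  moreover have "\<And>l. U l -` {..t} \<inter> space M = {\<omega>\<in>space M. U l \<omega> \<le> t}" by auto
  ultimately show ?thesis using j by simp
qed

lemma A_sets[measurable]: "i \<ge> 1 \<Longrightarrow> {\<omega>\<in>space M. U i \<omega> \<le> t} \<in> events"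
  by measurable

lemma cov_ind:
  assumes i: "i \<ge> 1" and j: "j \<ge> 1" and t: "0 \<le> t" "t \<le> 1"
  shows "expectation (\<lambda>\<omega>. (indicator {\<omega>\<in>space M. U i \<omega> \<le> t} \<omega> - t) *
                           (indicator {\<omega>\<in>space M. U j \<omega> \<le> t} \<omega> - t)) = (if i = j then t - t\<^sup>2 else 0)"
proof -
  define A where "A l = {\<omega>\<in>space M. U l \<omega> \<le> t}" for l
  have As: "A i \<in> events" "A j \<in> events" unfolding A_def using i j by auto
  have e: "\<And>\<omega>. (indicator (A i) \<omega> - t) * (indicator (A j) \<omega> - t) =
     indicator (A i \<inter> A j) \<omega> - t * indicator (A i) \<omega> - t * indicator (A j) \<omega> + t\<^sup>2"
    by (auto simp: indicator_def power2_eq_square algebra_simps)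
  have "expectation (\<lambda>\<omega>. (indicator (A i) \<omega> - t) * (indicator (A j) \<omega> - t)) =
        prob (A i \<inter> A j) - t * prob (A i) - t * prob (A j) + t\<^sup>2"
  proof -
    have I1: "integrable M (indicat_real (A i \<inter> A j))" "integrable M (\<lambda>\<omega>. t * indicat_real (A i) \<omega>)"
      "integrable M (\<lambda>\<omega>. t * indicat_real (A j) \<omega>)" using As
      by (auto intro!: integrable_real_indicator integrable_mult_right simp: less_top[symmetric])
    have "expectation (\<lambda>\<omega>. indicator (A i \<inter> A j) \<omega> - t * indicator (A i) \<omega> - t * indicator (A j) \<omega> + t\<^sup>2)
       = expectation (indicator (A i \<inter> A j)) - expectation (\<lambda>\<omega>. t * indicator (A i) \<omega>)
         - expectation (\<lambda>\<omega>. t * indicator (A j) \<omega>) + t\<^sup>2"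
      using I1 by (simp add: integral_add integral_diff prob_space)
    also have "\<dots> = prob (A i \<inter> A j) - t * prob (A i) - t * prob (A j) + t\<^sup>2"
      using As by (simp add: Int_absorb2 sets.sets_into_space)
    finally show ?thesis unfolding e .
  qed
  also have "\<dots> = (if i = j then t - t\<^sup>2 else 0)"
    using prob_U_le[OF i t] prob_U_le[OF j t] prob_U_pair[OF i j, of t]
    by (auto simp: A_def power2_eq_square)
  finally show ?thesis unfolding A_def .
qed

lemma binom_tail:
  assumes t: "0 < t" "t < 1" and kn: "real k < real n * t"
  shows "prob {\<omega>\<in>space M. (\<Sum>i=1..n. indicator {..t} (U i \<omega>) :: real) \<le> real k}
           \<le> real n * t / (real n * t - real k)\<^sup>2"
proof -
  define Y where "Y l \<omega> = (indicator {\<omega>\<in>space M. U l \<omega> \<le> t} \<omega> :: real)" for l \<omega>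
  define S where "S \<omega> = (\<Sum>i=1..n. Y i \<omega>)" for \<omega>
  have Ym[measurable]: "\<And>l. l \<in> {1..n} \<Longrightarrow> Y l \<in> borel_measurable M"
    unfolding Y_def by measurable
  have Sb: "(S \<omega> - real n * t)\<^sup>2 \<le> (real n + real n * t)^2" for \<omega>
  proof -
    have "S \<omega> \<le> (\<Sum>i=1..n. 1)" unfolding S_def Y_def
      by (intro sum_mono) (auto simp: indicator_def)
    moreover have "0 \<le> S \<omega>" unfolding S_def Y_def
      by (intro sum_nonneg) (auto simp: indicator_def)
    ultimately
    have "\<bar>S \<omega> - real n * t\<bar> \<le> real n + real n * t" using t
      by (auto simp: abs_if) (smt (verit) mult_nonneg_nonneg of_nat_0_le_iff)
    then show ?thesis by (metis abs_ge_zero power2_abs power_mono)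
  qed
  have Sm[measurable]: "S \<in> borel_measurable M" unfolding S_def
    by (intro borel_measurable_sum) (auto intro: Ym)
  have int: "integrable M (\<lambda>\<omega>. (S \<omega> - real n * t)\<^sup>2)"
    using Sb
    by (intro finite_measure.integrable_const_bound[where B="(real n + real n * t)^2"] finite_measure_axioms AE_I2) 
       (auto intro!: AE_I2)
  have sq: "(S \<omega> - real n * t)\<^sup>2 = (\<Sum>i=1..n. \<Sum>j=1..n. (Y i \<omega> - t) * (Y j \<omega> - t))" for \<omega>
  proof -
    have "S \<omega> - real n * t = (\<Sum>i=1..n. Y i \<omega> - t)" unfolding S_def by (simp add: sum_subtractf)
    then show ?thesis by (simp add: power2_eq_square sum_product)
  qed
  have E: "expectation (\<lambda>\<omega>. (S \<omega> - real n * t)\<^sup>2) = real n * (t - t\<^sup>2)"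
  proof -
    have Yint: "integrable M (\<lambda>\<omega>. (Y i \<omega> - t) * (Y j \<omega> - t))" if "i \<in> {1..n}" "j \<in> {1..n}" for i j
    proof (intro finite_measure.integrable_const_bound[where B=1] finite_measure_axioms AE_I2)
      fix \<omega> show "norm ((Y i \<omega> - t) * (Y j \<omega> - t)) \<le> 1"
        using t unfolding Y_def by (auto simp: indicator_def abs_mult mult_le_one)
    qed (use that in measurable)
    have "expectation (\<lambda>\<omega>. (S \<omega> - real n * t)\<^sup>2) = expectation (\<lambda>\<omega>. \<Sum>i=1..n. \<Sum>j=1..n. (Y i \<omega> - t) * (Y j \<omega> - t))"
      unfolding sq ..
    also have "\<dots> = (\<Sum>i=1..n. expectation (\<lambda>\<omega>. \<Sum>j=1..n. (Y i \<omega> - t) * (Y j \<omega> - t)))"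
      by (rule Bochner_Integration.integral_sum[where f="\<lambda>i \<omega>. \<Sum>j=1..n. (Y i \<omega> - t) * (Y j \<omega> - t)"]) (auto intro!: Yint)
    also have "\<dots> = (\<Sum>i=1..n. \<Sum>j=1..n. expectation (\<lambda>\<omega>. (Y i \<omega> - t) * (Y j \<omega> - t)))"
      by (intro sum.cong refl Bochner_Integration.integral_sum[where f="\<lambda>j \<omega>. (Y _ \<omega> - t) * (Y j \<omega> - t)"]) (auto intro!: Yint)
    also have "\<dots> = (\<Sum>i=1..n. \<Sum>j=1..n. if i = j then t - t\<^sup>2 else 0)"
      unfolding Y_def using t by (intro sum.cong refl cov_ind) auto
    also have "\<dots> = real n * (t - t\<^sup>2)" by simp
    finally show ?thesis .
  qed
  have "{\<omega>\<in>space M. (\<Sum>i=1..n. indicator {..t} (U i \<omega>) :: real) \<le> real k}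
     \<subseteq> {\<omega>\<in>space M. (S \<omega> - real n * t)\<^sup>2 \<ge> (real n * t - real k)\<^sup>2}"
  proof safe
    fix \<omega> assume \<omega>: "\<omega> \<in> space M" "(\<Sum>i=1..n. indicator {..t} (U i \<omega>) :: real) \<le> real k"
    have "S \<omega> = (\<Sum>i=1..n. indicator {..t} (U i \<omega>))" unfolding S_def Y_def using \<omega>(1)
      by (intro sum.cong) (auto simp: indicator_def)
    then have "real n * t - real k \<le> real n * t - S \<omega>" "0 \<le> real n * t - real k" using \<omega>(2) kn by auto
    then show "(real n * t - real k)\<^sup>2 \<le> (S \<omega> - real n * t)\<^sup>2"
      by (metis power2_commute power_mono)
  qed
  then have "prob {\<omega>\<in>space M. (\<Sum>i=1..n. indicator {..t} (U i \<omega>) :: real) \<le> real k}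
      \<le> prob {\<omega>\<in>space M. (S \<omega> - real n * t)\<^sup>2 \<ge> (real n * t - real k)\<^sup>2}"
    by (intro finite_measure_mono) measurable
  also have "\<dots> \<le> expectation (\<lambda>\<omega>. (S \<omega> - real n * t)\<^sup>2) / (real n * t - real k)\<^sup>2"
    by (rule integral_Markov_inequality_measure[OF int, where A="space M"]) (use kn in auto)
  also have "\<dots> \<le> real n * t / (real n * t - real k)\<^sup>2"
    unfolding E using t kn by (intro divide_right_mono) (auto simp: algebra_simps)
  finally show ?thesis .
qed

lemma prob_some_small:
  assumes x: "0 \<le> x" "x \<le> 1"
  shows "prob {\<omega>\<in>space M. \<exists>i\<in>{1..n}. U i \<omega> < x} \<le> real n * x"
proof -
  have "{\<omega>\<in>space M. \<exists>i\<in>{1..n}. U i \<omega> < x} = (\<Union>i\<in>{1..n}. {\<omega>\<in>space M. U i \<omega> < x})" by auto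
  also have "prob \<dots> \<le> (\<Sum>i\<in>{1..n}. prob {\<omega>\<in>space M. U i \<omega> < x})"
    by (rule measure_UNION_le) auto
  also have "\<dots> = (\<Sum>i\<in>{1..n}. x)" using prob_U_less x by (intro sum.cong) auto
  finally show ?thesis by simp
qed

lemma prob_some_out:
  shows "prob {\<omega>\<in>space M. \<exists>i\<in>{1..n}. U i \<omega> \<notin> {0<..<1}} = 0"
proof -
  have "{\<omega>\<in>space M. \<exists>i\<in>{1..n}. U i \<omega> \<notin> {0<..<1}} = (\<Union>i\<in>{1..n}. {\<omega>\<in>space M. U i \<omega> \<notin> {0<..<1}})" by auto
  also have "prob \<dots> \<le> (\<Sum>i\<in>{1..n}. prob {\<omega>\<in>space M. U i \<omega> \<notin> {0<..<1}})"
    by (rule measure_UNION_le) auto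
  also have "\<dots> = 0" using prob_U_out by (intro sum.neutral) auto
  finally show ?thesis using measure_nonneg by (simp add: order_antisym)
qed

lemma sets_some_small[measurable]: "{\<omega>\<in>space M. \<exists>i\<in>{1..n}. U i \<omega> < x} \<in> events"
  "{\<omega>\<in>space M. \<exists>i\<in>{1..n}. U i \<omega> \<notin> {0<..<1}} \<in> events"
  "{\<omega>\<in>space M. (\<Sum>i=1..n. indicator {..t} (U i \<omega>) :: real) \<le> real k} \<in> events"
  by measurable

end


lemma sl_perm: "mset xs = mset ys \<Longrightarrow> sum_list (map (g::'a\<Rightarrow>real) xs) = sum_list (map g ys)"
  by (metis mset_map sum_mset_sum_list)

lemma len_sort_os: "length (sort (map u [1..<n+1])) = n" by simp

lemma set_sort_os: "set (sort (map u [1..<n+1])) = u ` {1..n}" by auto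

lemma ostat_in: "1 \<le> m \<Longrightarrow> m \<le> n \<Longrightarrow> ostat n u m \<in> u ` {1..n}"
proof -
  assume m: "1 \<le> m" "m \<le> n"
  have "sort (map u [1..<n+1]) ! (m - 1) \<in> set (sort (map u [1..<n+1]))"
    using m by (intro nth_mem) simp
  then show ?thesis unfolding ostat_def set_sort_os .
qed

lemma ostat_mono: "1 \<le> m \<Longrightarrow> m \<le> m' \<Longrightarrow> m' \<le> n \<Longrightarrow> ostat n u m \<le> ostat n u m'"
  unfolding ostat_def
  by (rule sorted_nth_mono[OF sorted_sort]) auto

lemma ostat_count:
  fixes u :: "nat \<Rightarrow> real"
  assumes k: "k + 1 \<le> n" and gt: "ostat n u (k+1) > t"
  shows "(\<Sum>i=1..n. indicator {..t} (u i) :: real) \<le> real k"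
proof -
  define g where "g x = (indicator {..t} x :: real)" for x
  define ys where "ys = sort (map u [1..<n+1])"
  have leny: "length ys = n" unfolding ys_def by simp
  have "{1..n} = set [1..<n+1]" by auto
  then have "(\<Sum>i=1..n. g (u i)) = sum_list (map g (map u [1..<n+1]))"
    by (simp only: sum_set_upt_conv_sum_list_nat map_map o_def)
  also have "\<dots> = sum_list (map g ys)" unfolding ys_def
    by (rule sl_perm) simp
  also have "sum_list (map g ys) = (\<Sum>j<n. g (ys ! j))" by (simp add: sum_list_sum_nth leny atLeast0LessThan)
  also have "\<dots> = (\<Sum>j<k. g (ys ! j)) + (\<Sum>j\<in>{k..<n}. g (ys ! j))"
  proof -
    have "k \<le> n" using k by simp
    then show ?thesis by (metis sum.atLeastLessThan_concat atLeast0LessThan le0)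
  qed
  also have "(\<Sum>j\<in>{k..<n}. g (ys ! j)) = 0"
  proof (intro sum.neutral ballI)
    fix j assume j: "j \<in> {k..<n}"
    have "ys ! k \<le> ys ! j" unfolding ys_def using j by (intro sorted_nth_mono[OF sorted_sort]) auto
    moreover have "ys ! k > t" using gt unfolding ostat_def ys_def by simp
    ultimately show "g (ys ! j) = 0" unfolding g_def by auto
  qed
  also have "(\<Sum>j<k. g (ys ! j)) \<le> (\<Sum>j<k. 1)" by (intro sum_mono) (auto simp: g_def indicator_def)
  finally show ?thesis unfolding g_def by simp
qed

lemma ostat_antitone:
  fixes u :: "nat \<Rightarrow> real" and \<phi> :: "real \<Rightarrow> real"
  assumes anti: "\<And>x y. x \<in> u ` {1..n} \<Longrightarrow> y \<in> u ` {1..n} \<Longrightarrow> x \<le> y \<Longrightarrow> \<phi> y \<le> \<phi> x"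
    and m: "1 \<le> m" "m \<le> n"
  shows "ostat n (\<lambda>i. \<phi> (u i)) m = \<phi> (ostat n u (n + 1 - m))"
proof -
  define ys where "ys = sort (map u [1..<n+1])"
  have len: "length ys = n" unfolding ys_def by simp
  have sety: "set ys = u ` {1..n}" unfolding ys_def by auto
  have "sort (map (\<lambda>i. \<phi> (u i)) [1..<n+1]) = map \<phi> (rev ys)"
  proof (rule properties_for_sort)
    show "mset (map \<phi> (rev ys)) = mset (map (\<lambda>i. \<phi> (u i)) [1..<n+1])"
      unfolding ys_def by (simp only: mset_map mset_rev mset_sort multiset.map_comp o_def)
    show "sorted (map \<phi> (rev ys))"
    proof (rule sorted_iff_nth_mono[THEN iffD2], intro allI impI)
      fix i j assume ij: "i \<le> j" "j < length (map \<phi> (rev ys))"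
      then have ij': "i \<le> j" "j < n" by (auto simp: len)
      have "ys ! (n - Suc j) \<le> ys ! (n - Suc i)" unfolding ys_def
        using ij' by (intro sorted_nth_mono[OF sorted_sort]) auto
      moreover have "ys ! (n - Suc j) \<in> u ` {1..n}" "ys ! (n - Suc i) \<in> u ` {1..n}"
        using ij' unfolding sety[symmetric] by (auto intro!: nth_mem simp: len)
      ultimately have "\<phi> (ys ! (n - Suc i)) \<le> \<phi> (ys ! (n - Suc j))" using anti by blast
      then show "map \<phi> (rev ys) ! i \<le> map \<phi> (rev ys) ! j" using ij' by (simp add: rev_nth len)
    qed
  qed
  then have "ostat n (\<lambda>i. \<phi> (u i)) m = map \<phi> (rev ys) ! (m - 1)" unfolding ostat_def by simp
  also have "\<dots> = \<phi> (ys ! (n - m))" using m len by (simp add: rev_nth Suc_diff_le)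
  also have "\<dots> = \<phi> (ostat n u (n + 1 - m))" unfolding ostat_def ys_def using m by simp
  finally show ?thesis .
qed


lemma ln1p_bound: "\<bar>x::real\<bar> \<le> 1/2 \<Longrightarrow> \<bar>ln (1 + x)\<bar> \<le> 2 * \<bar>x\<bar>"
proof -
  assume x: "\<bar>x\<bar> \<le> 1/2"
  have "\<bar>ln (1 + x) - x\<bar> \<le> 2 * x\<^sup>2" by (rule abs_ln_one_plus_x_minus_x_bound[OF x])
  moreover have "2 * x\<^sup>2 \<le> \<bar>x\<bar>"
  proof -
    have "x\<^sup>2 = \<bar>x\<bar> * \<bar>x\<bar>" by (simp add: power2_eq_square)
    moreover have "(2 * \<bar>x\<bar>) * \<bar>x\<bar> \<le> 1 * \<bar>x\<bar>" using x by (intro mult_right_mono) auto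
    ultimately show ?thesis by simp
  qed
  ultimately show ?thesis by linarith
qed

lemma inv_has_integral:
  fixes a v :: real
  assumes "0 < a" "a \<le> v"
  shows "((\<lambda>t. 1 / t) has_integral (ln v - ln a)) {a..v}"
proof -
  have "\<And>x. x \<in> {a..v} \<Longrightarrow> ((ln :: real \<Rightarrow> real) has_vector_derivative (1 / x)) (at x within {a..v})"
    using assms by (auto intro!: derivative_eq_intros simp: has_real_derivative_iff_has_vector_derivative[symmetric]
        has_field_derivative_at_within)
  from Henstock_Kurzweil_Integration.fundamental_theorem_of_calculus[OF assms(2) this]
  have "((\<lambda>t. 1 / t) has_integral (ln v - ln a)) {a..v}" by simp
  then show ?thesis .
qed

lemma int_dev:
  fixes h :: "real \<Rightarrow> real"
  assumes a: "0 < a" "a \<le> v" and hi: "(\<lambda>t. h t / t) integrable_on {a..v}"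
    and bd: "\<And>x. x \<in> {a..v} \<Longrightarrow> \<bar>h x - C\<bar> \<le> e"
  shows "\<bar>integral {a..v} (\<lambda>t. h t / t) - C * (ln v - ln a)\<bar> \<le> e * (ln v - ln a)"
proof -
  have i1: "((\<lambda>t. C * (1 / t)) has_integral C * (ln v - ln a)) {a..v}"
    by (rule has_integral_mult_right[OF inv_has_integral[OF a]])
  have i2: "((\<lambda>t. e * (1 / t)) has_integral e * (ln v - ln a)) {a..v}"
    by (rule has_integral_mult_right[OF inv_has_integral[OF a]])
  have "integral {a..v} (\<lambda>t. h t / t) - C * (ln v - ln a) = integral {a..v} (\<lambda>t. h t / t - C * (1 / t))"
  proof -
    have "integral {a..v} (\<lambda>t. h t / t - C * (1 / t)) = integral {a..v} (\<lambda>t. h t / t) - integral {a..v} (\<lambda>t. C * (1 / t))"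
      using hi i1 by (intro integral_diff) (auto intro: has_integral_integrable)
    then show ?thesis using integral_unique[OF i1] by simp
  qed
  also have "\<bar>\<dots>\<bar> \<le> integral {a..v} (\<lambda>t. e * (1 / t))"
    unfolding real_norm_def[symmetric]
  proof (rule integral_norm_bound_integral)
    show "(\<lambda>t. h t / t - C * (1 / t)) integrable_on {a..v}" using hi i1 by (intro integrable_diff) (auto intro: has_integral_integrable)
    show "(\<lambda>t. e * (1 / t)) integrable_on {a..v}" using i2 by (rule has_integral_integrable)
    fix x assume x: "x \<in> {a..v}"
    then have "x > 0" using a by auto
    then have "\<bar>h x / x - C * (1 / x)\<bar> = \<bar>h x - C\<bar> / x" by (simp add: field_simps abs_div)
    also have "\<dots> \<le> e / x" using bd[OF x] \<open>x > 0\<close> by (simp add: divide_right_mono)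
    finally show "norm (h x / x - C * (1 / x)) \<le> e * (1 / x)" by simp
  qed
  also have "\<dots> = e * (ln v - ln a)" using i2 by (rule integral_unique)
  finally show ?thesis .
qed

lemma int_split:
  fixes h :: "real \<Rightarrow> real"
  assumes "a \<le> v" "v \<le> 1" "h integrable_on {a..1}"
  shows "integral {a..1} h - integral {v..1} h = integral {a..v} h"
  using Henstock_Kurzweil_Integration.integral_combine[OF assms] by simp

lemma int_split_dev:
  fixes h :: "real \<Rightarrow> real"
  assumes a: "0 < a" "a \<le> v" "v \<le> 1" and hi: "(\<lambda>t. h t / t) integrable_on {a..1}"
    and bd: "\<And>x. x \<in> {a..v} \<Longrightarrow> \<bar>h x - C\<bar> \<le> e"
  shows "\<bar>integral {a..1} (\<lambda>t. h t / t) - integral {v..1} (\<lambda>t. h t / t) - C * (ln v - ln a)\<bar> \<le> e * (ln v - ln a)"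
  using int_dev[OF a(1,2) integrable_subinterval_real[OF hi] bd] int_split[OF a(2,3) hi] a by auto


lemma sum_abs_bound:
  fixes f D B :: "nat \<Rightarrow> real"
  assumes "\<And>j. j \<in> A \<Longrightarrow> 0 \<le> f j \<and> \<bar>D j\<bar> \<le> B j"
  shows "\<bar>\<Sum>j\<in>A. f j * D j\<bar> \<le> (\<Sum>j\<in>A. f j * B j)"
proof -
  have "\<bar>\<Sum>j\<in>A. f j * D j\<bar> \<le> (\<Sum>j\<in>A. \<bar>f j * D j\<bar>)" by (rule sum_abs)
  also have "\<dots> \<le> (\<Sum>j\<in>A. f j * B j)"
    using assms by (intro sum_mono) (auto simp: abs_mult intro!: mult_left_mono)
  finally show ?thesis .
qed

lemma frechet_det:
  fixes w f p b Q :: "real \<Rightarrow> real" and wn :: "nat \<Rightarrow> real" and fn :: "nat \<Rightarrow> real"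
  assumes rep: "\<forall>x\<in>{0<..<1}. (\<lambda>t. b t / t) integrable_on {x..1} \<and>
        Q x = ln c + ln (1 + p x) - \<gamma> * ln x + integral {x..1} (\<lambda>t. b t / t)"
    and w: "\<And>j. j \<in> {1..k} \<Longrightarrow> 0 < wn j \<and> wn j \<le> wn (Suc j) \<and> wn (Suc j) \<le> tt"
    and tt: "tt < 1"
    and pb: "\<And>x. 0 < x \<Longrightarrow> x \<le> tt \<Longrightarrow> \<bar>p x\<bar> \<le> r1 \<and> \<bar>b x\<bar> \<le> r2" and r1: "r1 \<le> 1/2"
    and f: "\<And>j. j \<in> {1..k} \<Longrightarrow> 0 \<le> fn j"
  shows "\<bar>(\<Sum>j=1..k. fn j * (Q (wn j) - Q (wn (Suc j)))) - \<gamma> * (\<Sum>j=1..k. fn j * ln (wn (Suc j) / wn j))\<bar>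
     \<le> 4 * r1 * (\<Sum>j=1..k. fn j) + r2 * (\<Sum>j=1..k. fn j * ln (wn (Suc j) / wn j))"
proof -
  have "\<bar>(\<Sum>j=1..k. fn j * (Q (wn j) - Q (wn (Suc j)))) - \<gamma> * (\<Sum>j=1..k. fn j * ln (wn (Suc j) / wn j))\<bar>
      = \<bar>\<Sum>j=1..k. fn j * (Q (wn j) - Q (wn (Suc j)) - \<gamma> * ln (wn (Suc j) / wn j))\<bar>"
    by (simp add: sum_distrib_left sum_subtractf algebra_simps sum.distrib)
  also have "\<dots> \<le> (\<Sum>j=1..k. fn j * (4 * r1 + r2 * ln (wn (Suc j) / wn j)))"
  proof (rule sum_abs_bound)
    fix j assume j: "j \<in> {1..k}"
    note wj = w[OF j]
    define a v where "a = wn j" and "v = wn (Suc j)"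
    have av: "0 < a" "a \<le> v" "v < 1" "v \<le> tt" using wj tt unfolding a_def v_def by auto
    have ra: "(\<lambda>t. b t / t) integrable_on {a..1}" "Q a = ln c + ln (1 + p a) - \<gamma> * ln a + integral {a..1} (\<lambda>t. b t / t)"
      using rep av by auto
    have rv: "Q v = ln c + ln (1 + p v) - \<gamma> * ln v + integral {v..1} (\<lambda>t. b t / t)"
      using rep av by auto
    have I: "\<bar>integral {a..1} (\<lambda>t. b t / t) - integral {v..1} (\<lambda>t. b t / t) - 0 * (ln v - ln a)\<bar> \<le> r2 * (ln v - ln a)"
      by (rule int_split_dev[OF av(1,2) _ ra(1)]) (use av pb in auto)
    have pa: "\<bar>ln (1 + p a)\<bar> \<le> 2 * r1" using ln1p_bound[of "p a"] pb[of a] r1 av by auto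
    have pv: "\<bar>ln (1 + p v)\<bar> \<le> 2 * r1" using ln1p_bound[of "p v"] pb[of v] r1 av by auto
    have lnd: "ln (v / a) = ln v - ln a" using av by (simp add: ln_div)
    have "Q a - Q v - \<gamma> * ln (v / a) = (ln (1 + p a) - ln (1 + p v)) +
           (integral {a..1} (\<lambda>t. b t / t) - integral {v..1} (\<lambda>t. b t / t))"
      unfolding ra(2) rv lnd by (simp add: algebra_simps)
    then have "\<bar>Q a - Q v - \<gamma> * ln (v / a)\<bar> \<le> 4 * r1 + r2 * ln (v / a)"
      using pa pv I lnd by (smt (verit))
    then show "0 \<le> fn j \<and> \<bar>Q (wn j) - Q (wn (Suc j)) - \<gamma> * ln (wn (Suc j) / wn j)\<bar>
         \<le> 4 * r1 + r2 * ln (wn (Suc j) / wn j)" using f[OF j] unfolding a_def v_def by simp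
  qed
  also have "\<dots> = 4 * r1 * (\<Sum>j=1..k. fn j) + r2 * (\<Sum>j=1..k. fn j * ln (wn (Suc j) / wn j))"
    by (simp add: sum_distrib_left sum.distrib algebra_simps)
  finally show ?thesis .
qed

lemma gumbel_det:
  fixes s Q :: "real \<Rightarrow> real" and wn :: "nat \<Rightarrow> real" and fn :: "nat \<Rightarrow> real"
  assumes rep: "\<forall>x\<in>{0<..<1}. (\<lambda>t. s t / t) integrable_on {x..1} \<and>
        Q x = d - s x + integral {x..1} (\<lambda>t. s t / t)"
    and w: "\<And>j. j \<in> {1..k} \<Longrightarrow> 0 < wn j \<and> wn j \<le> wn (Suc j) \<and> wn (Suc j) < 1"
    and sb: "\<And>x. x \<in> {wn 1..wn (Suc k)} \<Longrightarrow> \<bar>s x - s0\<bar> \<le> \<epsilon> * s0"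
    and mono: "\<And>j. j \<in> {1..Suc k} \<Longrightarrow> wn 1 \<le> wn j \<and> wn j \<le> wn (Suc k)"
    and f: "\<And>j. j \<in> {1..k} \<Longrightarrow> 0 \<le> fn j"
  shows "\<bar>(\<Sum>j=1..k. fn j * (Q (wn j) - Q (wn (Suc j)))) - s0 * (\<Sum>j=1..k. fn j * ln (wn (Suc j) / wn j))\<bar>
     \<le> \<epsilon> * s0 * (2 * (\<Sum>j=1..k. fn j) + (\<Sum>j=1..k. fn j * ln (wn (Suc j) / wn j)))"
proof -
  have "\<bar>(\<Sum>j=1..k. fn j * (Q (wn j) - Q (wn (Suc j)))) - s0 * (\<Sum>j=1..k. fn j * ln (wn (Suc j) / wn j))\<bar>
      = \<bar>\<Sum>j=1..k. fn j * (Q (wn j) - Q (wn (Suc j)) - s0 * ln (wn (Suc j) / wn j))\<bar>"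
    by (simp add: sum_distrib_left sum_subtractf algebra_simps sum.distrib)
  also have "\<dots> \<le> (\<Sum>j=1..k. fn j * (2 * (\<epsilon> * s0) + \<epsilon> * s0 * ln (wn (Suc j) / wn j)))"
  proof (rule sum_abs_bound)
    fix j assume j: "j \<in> {1..k}"
    note wj = w[OF j]
    define a v where "a = wn j" and "v = wn (Suc j)"
    have av: "0 < a" "a \<le> v" "v < 1" using wj unfolding a_def v_def by auto
    have inr: "a \<in> {wn 1..wn (Suc k)}" "v \<in> {wn 1..wn (Suc k)}"
      using mono[of j] mono[of "Suc j"] j unfolding a_def v_def by auto
    have ra: "(\<lambda>t. s t / t) integrable_on {a..1}" "Q a = d - s a + integral {a..1} (\<lambda>t. s t / t)"
      using rep av by auto
    have rv: "Q v = d - s v + integral {v..1} (\<lambda>t. s t / t)"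
      using rep av by auto
    have I: "\<bar>integral {a..1} (\<lambda>t. s t / t) - integral {v..1} (\<lambda>t. s t / t) - s0 * (ln v - ln a)\<bar> \<le> (\<epsilon> * s0) * (ln v - ln a)"
    proof (rule int_split_dev[OF av(1,2) _ ra(1)])
      show "v \<le> 1" using av by simp
      fix x assume "x \<in> {a..v}"
      then have "x \<in> {wn 1..wn (Suc k)}" using inr by auto
      then show "\<bar>s x - s0\<bar> \<le> \<epsilon> * s0" by (rule sb)
    qed
    have lnd: "ln (v / a) = ln v - ln a" using av by (simp add: ln_div)
    have "Q a - Q v - s0 * ln (v / a) = (s v - s a) +
           (integral {a..1} (\<lambda>t. s t / t) - integral {v..1} (\<lambda>t. s t / t) - s0 * (ln v - ln a))"
      unfolding ra(2) rv lnd by (simp add: algebra_simps)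
    then have "\<bar>Q a - Q v - s0 * ln (v / a)\<bar> \<le> 2 * (\<epsilon> * s0) + \<epsilon> * s0 * ln (v / a)"
      using sb[OF inr(1)] sb[OF inr(2)] I lnd by (smt (verit))
    then show "0 \<le> fn j \<and> \<bar>Q (wn j) - Q (wn (Suc j)) - s0 * ln (wn (Suc j) / wn j)\<bar>
         \<le> 2 * (\<epsilon> * s0) + \<epsilon> * s0 * ln (wn (Suc j) / wn j)" using f[OF j] unfolding a_def v_def by simp
  qed
  also have "\<dots> = \<epsilon> * s0 * (2 * (\<Sum>j=1..k. fn j) + (\<Sum>j=1..k. fn j * ln (wn (Suc j) / wn j)))"
    by (simp add: sum_distrib_left sum.distrib algebra_simps)
  finally show ?thesis .
qed

lemma sq_sum_le:
  fixes a :: "nat \<Rightarrow> real"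
  shows "finite A \<Longrightarrow> (\<forall>i\<in>A. 0 \<le> a i) \<Longrightarrow> (\<Sum>i\<in>A. (a i)\<^sup>2) \<le> (\<Sum>i\<in>A. a i)\<^sup>2"
proof (induction A rule: finite_induct)
  case (insert x F)
  have "0 \<le> (\<Sum>i\<in>F. a i)" using insert by (auto intro: sum_nonneg)
  then have "(a x)\<^sup>2 + (\<Sum>i\<in>F. a i)\<^sup>2 \<le> (a x + (\<Sum>i\<in>F. a i))\<^sup>2"
    using insert by (simp add: power2_eq_square algebra_simps)
  then show ?case using insert by simp
qed simp

lemma sig_an:
  assumes f: "\<And>j. j \<in> {1..k} \<Longrightarrow> 0 \<le> f j"
  shows "0 \<le> sigman k f" "sigman k f \<le> an k f" "an k f \<le> (\<Sum>j=1..k. f j)" "0 \<le> an k f"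
proof -
  show "0 \<le> sigman k f" unfolding sigman_def by (auto intro!: sum_nonneg)
  have "(\<Sum>j=1..k. (f j)\<^sup>2 / (real j)\<^sup>2) = (\<Sum>j=1..k. (f j / real j)\<^sup>2)" by (simp add: power_divide)
  also have "\<dots> \<le> (\<Sum>j=1..k. f j / real j)\<^sup>2" by (rule sq_sum_le) (use f in auto)
  finally have "sqrt (\<Sum>j=1..k. (f j)\<^sup>2 / (real j)\<^sup>2) \<le> sqrt ((\<Sum>j=1..k. f j / real j)\<^sup>2)"
    by (rule real_sqrt_le_mono)
  then have "sigman k f \<le> sqrt ((an k f)\<^sup>2)" unfolding sigman_def an_def by simp
  moreover have "0 \<le> an k f" unfolding an_def using f by (auto intro!: sum_nonneg)
  ultimately show "sigman k f \<le> an k f" by simp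
  show "0 \<le> an k f" by fact
  show "an k f \<le> (\<Sum>j=1..k. f j)" unfolding an_def
  proof (intro sum_mono)
    fix j assume j: "j \<in> {1..k}"
    have "f j / real j \<le> f j / 1" using f[OF j] j by (intro divide_left_mono) auto
    then show "f j / real j \<le> f j" by simp
  qed
qed

lemma frechet_alg:
  fixes T V a \<sigma> S \<gamma> r1 r2 \<eta>1 \<eta>2 M :: real
  assumes \<sigma>: "0 \<le> \<sigma>" "\<sigma> \<le> a" "a \<le> S" and TV: "\<bar>T - \<gamma> * V\<bar> \<le> 4 * r1 * S + r2 * V"
    and VM: "\<bar>(V - a) / \<sigma>\<bar> \<le> M" and r: "0 \<le> r1" "0 \<le> r2" and g: "\<gamma> > 0"
    and e1: "0 < \<sigma> \<Longrightarrow> r1 * (S / \<sigma>) \<le> \<eta>1" and e2: "0 < \<sigma> \<Longrightarrow> r2 * (S / \<sigma>) \<le> \<eta>2"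
    and pos: "0 \<le> \<eta>1" "0 \<le> \<eta>2" "0 \<le> M"
  shows "\<bar>a / \<sigma> * (T / a - \<gamma>) - \<gamma> * ((V - a) / \<sigma>)\<bar> \<le> 4 * \<eta>1 + \<eta>2 * M + \<eta>2"
proof (cases "\<sigma> = 0")
  case True then show ?thesis using pos by simp
next
  case False
  then have sp: "\<sigma> > 0" using \<sigma> by simp
  then have ap: "a > 0" using \<sigma> by simp
  have S1: "S / \<sigma> \<ge> 1" using sp \<sigma> by simp
  have "a / \<sigma> * (T / a - \<gamma>) - \<gamma> * ((V - a) / \<sigma>) = (T - \<gamma> * V) / \<sigma>"
    using sp ap by (simp add: field_simps)
  then have "\<bar>a / \<sigma> * (T / a - \<gamma>) - \<gamma> * ((V - a) / \<sigma>)\<bar> \<le> (4 * r1 * S + r2 * V) / \<sigma>"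
    using TV sp by (simp add: abs_div divide_right_mono)
  also have "\<dots> = 4 * (r1 * (S / \<sigma>)) + r2 * ((V - a) / \<sigma>) + r2 * (a / \<sigma>)"
    using sp by (simp add: field_simps)
  also have "\<dots> \<le> 4 * \<eta>1 + \<eta>2 * M + \<eta>2"
  proof -
    have "r2 \<le> \<eta>2" using e2[OF sp] S1 r by (smt (verit) mult_le_cancel_left1)
    have "(V - a) / \<sigma> \<le> M" using VM abs_ge_self[of "(V-a)/\<sigma>"] by linarith
    then have "r2 * ((V - a) / \<sigma>) \<le> r2 * M" using r by (intro mult_left_mono) auto
    also have "\<dots> \<le> \<eta>2 * M" using \<open>r2 \<le> \<eta>2\<close> pos by (intro mult_right_mono) auto
    finally have A: "r2 * ((V - a) / \<sigma>) \<le> \<eta>2 * M" .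
    have "r2 * (a / \<sigma>) \<le> r2 * (S / \<sigma>)" using r \<sigma> sp by (intro mult_left_mono divide_right_mono) auto
    then show ?thesis using A e1[OF sp] e2[OF sp] by linarith
  qed
  finally show ?thesis .
qed

lemma gumbel_alg:
  fixes T V a \<sigma> S s0 \<epsilon> r C \<eta> M :: real
  assumes \<sigma>: "0 \<le> \<sigma>" "\<sigma> \<le> a" "a \<le> S" and TV: "\<bar>T - s0 * V\<bar> \<le> \<epsilon> * s0 * (2 * S + V)"
    and VM: "\<bar>(V - a) / \<sigma>\<bar> \<le> M" and s0: "s0 > 0" and \<epsilon>: "0 \<le> \<epsilon>" "\<epsilon> \<le> C * r" "0 \<le> r"
    and e: "0 < \<sigma> \<Longrightarrow> r * (S / \<sigma>) \<le> \<eta>"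
    and pos: "0 \<le> \<eta>" "0 \<le> M" "0 \<le> C"
  shows "\<bar>(T - a * s0) / (s0 * \<sigma>) - (V - a) / \<sigma>\<bar> \<le> C * \<eta> * (3 + M)"
proof (cases "\<sigma> = 0")
  case True then show ?thesis using pos by simp
next
  case False
  then have sp: "\<sigma> > 0" using \<sigma> by simp
  have S1: "S / \<sigma> \<ge> 1" using sp \<sigma> by simp
  have "(T - a * s0) / (s0 * \<sigma>) - (V - a) / \<sigma> = (T - s0 * V) / (s0 * \<sigma>)"
    using sp s0 by (simp add: field_simps)
  then have "\<bar>(T - a * s0) / (s0 * \<sigma>) - (V - a) / \<sigma>\<bar> = \<bar>T - s0 * V\<bar> / (s0 * \<sigma>)"
    using sp s0 by (simp add: abs_div)
  also have "\<dots> \<le> \<epsilon> * s0 * (2 * S + V) / (s0 * \<sigma>)"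
    using TV sp s0 by (intro divide_right_mono) auto
  also have "\<dots> = \<epsilon> * (2 * (S / \<sigma>) + (V - a) / \<sigma> + a / \<sigma>)"
    using sp s0 by (simp add: field_simps)
  also have "\<dots> \<le> \<epsilon> * (3 * (S / \<sigma>) + M)"
  proof (intro mult_left_mono \<epsilon>)
    have "a / \<sigma> \<le> S / \<sigma>" using \<sigma> sp by (intro divide_right_mono) auto
    then show "2 * (S / \<sigma>) + (V - a) / \<sigma> + a / \<sigma> \<le> 3 * (S / \<sigma>) + M" using VM abs_ge_self[of "(V-a)/\<sigma>"] by linarith
  qed
  also have "\<dots> = 3 * (\<epsilon> * (S / \<sigma>)) + \<epsilon> * M" by (simp add: algebra_simps)
  also have "\<dots> \<le> 3 * (C * \<eta>) + C * \<eta> * M"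
  proof -
    have "\<epsilon> * (S / \<sigma>) \<le> C * r * (S / \<sigma>)" using \<epsilon> S1 by (intro mult_right_mono) auto
    also have "\<dots> \<le> C * \<eta>" using mult_left_mono[OF e[OF sp] pos(3)] by (simp add: mult.assoc)
    finally have A: "\<epsilon> * (S / \<sigma>) \<le> C * \<eta>" .
    have "\<epsilon> * 1 \<le> \<epsilon> * (S / \<sigma>)" using S1 \<epsilon> by (intro mult_left_mono) auto
    then have "\<epsilon> * M \<le> C * \<eta> * M" using A pos by (intro mult_right_mono) auto
    then show ?thesis using A by linarith
  qed
  also have "\<dots> = C * \<eta> * (3 + M)" by (simp add: algebra_simps)
  finally show ?thesis .
qed


lemma ereal_extract:
  fixes g :: ereal
  assumes "0 \<le> g" "1 \<le> x" "g * ereal x < ereal \<eta>"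
  shows "\<exists>r. g = ereal r \<and> 0 \<le> r \<and> r * x \<le> \<eta>"
proof (cases g)
  case (real r) then show ?thesis using assms by auto
next
  case PInf then show ?thesis using assms by auto
next
  case MInf then show ?thesis using assms by auto
qed

lemma SUP_abs_ge:
  assumes "0 < lam * real (k n) / real n" "u \<in> {0<..lam * real (k n) / real n}"
  shows "ereal \<bar>p u\<bar> \<le> (SUP u\<in>{0<..lam * real (k n) / real n}. ereal \<bar>p u\<bar>)"
  using assms by (intro SUP_upper) auto

lemma SUP_abs_nonneg:
  assumes "0 < lam * real (k n) / real n"
  shows "0 \<le> (SUP u\<in>{0<..lam * real (k n) / real n}. ereal \<bar>p u\<bar>)"
proof -
  have "ereal \<bar>p (lam * real (k n) / real n)\<bar> \<le> (SUP u\<in>{0<..lam * real (k n) / real n}. ereal \<bar>p u\<bar>)"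
    using assms by (intro SUP_upper) auto
  then show ?thesis by (rule order_trans[rotated]) simp
qed

lemma CU_elim:
  assumes "CU Fa k g" "\<eta> > 0"
  shows "\<forall>\<^sub>F n in sequentially. \<forall>f\<in>Fa. g n * ereal ((\<Sum>j=1..k n. f j) / sigman (k n) f) < ereal \<eta>"
proof -
  have "\<forall>\<^sub>F n in sequentially. (SUP f\<in>Fa. g n * ereal ((\<Sum>j=1..k n. f j) / sigman (k n) f)) < ereal \<eta>"
    using assms unfolding CU_def by (intro order_tendstoD(2)) auto
  then show ?thesis
  proof eventually_elim
    case (elim n)
    show ?case
    proof
      fix f assume f: "f \<in> Fa"
      have "g n * ereal ((\<Sum>j=1..k n. f j) / sigman (k n) f) \<le> (SUP f\<in>Fa. g n * ereal ((\<Sum>j=1..k n. f j) / sigman (k n) f))"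
        using f by (rule SUP_upper)
      then show "g n * ereal ((\<Sum>j=1..k n. f j) / sigman (k n) f) < ereal \<eta>" using elim by (rule le_less_trans)
    qed
  qed
qed

lemma Ginv_mono:
  assumes mono: "mono F" and top: "(F \<longlongrightarrow> 1) at_top" and F1: "F 1 = 0"
    and v: "0 < v" "v \<le> v'" "v' < 1"
  shows "Ginv (\<lambda>x. F (exp x)) v \<le> Ginv (\<lambda>x. F (exp x)) v'"
  unfolding Ginv_def
proof (rule cInf_superset_mono)
  have "\<forall>\<^sub>F y in at_top. v' < F y" using order_tendstoD(1)[OF top v(3)] .
  then obtain N where N: "\<And>y. y \<ge> N \<Longrightarrow> v' < F y" by (auto simp: eventually_at_top_linorder)
  have "exp (ln (max N 1)) \<ge> N" by simp
  then have "v' \<le> F (exp (ln (max N 1)))" using N less_imp_le by blast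
  then show "{x. v' \<le> F (exp x)} \<noteq> {}" by blast
  show "bdd_below {x. v \<le> F (exp x)}"
  proof (rule bdd_belowI[where m=0])
    fix x assume x: "x \<in> {x. v \<le> F (exp x)}"
    show "0 \<le> x"
    proof (rule ccontr)
      assume "\<not> 0 \<le> x"
      then have "exp x \<le> 1" by simp
      then have "F (exp x) \<le> F 1" using mono by (simp add: monoD)
      then show False using x F1 v by simp
    qed
  qed
  show "{x. v' \<le> F (exp x)} \<subseteq> {x. v \<le> F (exp x)}" using v by auto
qed

lemma Tn_rep:
  fixes u :: "nat \<Rightarrow> real" and G :: "real \<Rightarrow> real"
  assumes u: "\<And>i. i \<in> {1..n} \<Longrightarrow> u i \<in> {0<..<1}" and kn: "k + 1 \<le> n"
    and Gm: "\<And>v v'. 0 < v \<Longrightarrow> v \<le> v' \<Longrightarrow> v' < 1 \<Longrightarrow> Ginv G v \<le> Ginv G v'"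
  shows "Tn k n (\<lambda>i. exp (Ginv G (1 - u i))) f =
     (\<Sum>j=1..k. f j * (Ginv G (1 - ostat n u j) - Ginv G (1 - ostat n u (Suc j))))"
proof -
  define \<phi> where "\<phi> x = exp (Ginv G (1 - x))" for x
  have anti: "\<And>x y. x \<in> u ` {1..n} \<Longrightarrow> y \<in> u ` {1..n} \<Longrightarrow> x \<le> y \<Longrightarrow> \<phi> y \<le> \<phi> x"
    unfolding \<phi>_def using u by (auto intro!: Gm)
  have e: "ostat n (\<lambda>i. \<phi> (u i)) m = \<phi> (ostat n u (n + 1 - m))" if "1 \<le> m" "m \<le> n" for m
    by (rule ostat_antitone[OF anti that])
  show ?thesis unfolding Tn_def \<phi>_def[symmetric]
  proof (intro sum.cong refl)
    fix j assume j: "j \<in> {1..k}"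
    have 1: "ostat n (\<lambda>i. \<phi> (u i)) (Suc (n - j)) = \<phi> (ostat n u j)"
      using e[of "n - j + 1"] j kn by auto
    have 2: "ostat n (\<lambda>i. \<phi> (u i)) (n - j) = \<phi> (ostat n u (Suc j))"
      using e[of "n - j"] j kn by (auto simp: Suc_diff_le)
    show "f j * (ln (ostat n (\<lambda>i. \<phi> (u i)) (n - j + 1)) - ln (ostat n (\<lambda>i. \<phi> (u i)) (n - j))) =
          f j * (Ginv G (1 - ostat n u j) - Ginv G (1 - ostat n u (Suc j)))"
      using 1 2 unfolding \<phi>_def by simp
  qed
qed

lemma Vn_rep:
  assumes kn: "k + 1 \<le> n"
  shows "Vn k n u f = (\<Sum>j=1..k. f j * ln (ostat n u (Suc j) / ostat n u j))"
  unfolding Vn_def Uos_def using kn by (intro sum.cong refl) auto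

lemma gumbel_s_bound:
  fixes c :: real and p b :: "real \<Rightarrow> real"
  assumes c: "c > 0" and bi: "\<forall>u\<in>{0<..<1}. (\<lambda>t. b t / t) integrable_on {u..1}"
    and \<kappa>: "0 < \<kappa>" "\<kappa> \<le> tt" and tt: "tt < 1" and x: "0 < x" "x \<le> tt"
    and pb: "\<And>y. 0 < y \<Longrightarrow> y \<le> tt \<Longrightarrow> \<bar>p y\<bar> \<le> r1 \<and> \<bar>b y\<bar> \<le> r2" and r1: "r1 \<le> 1/2"
    and D: "r2 * \<bar>ln x - ln \<kappa>\<bar> \<le> D" "D \<le> 1/2"
  shows "\<bar>gumbel_s c p b x - gumbel_s c p b \<kappa>\<bar> \<le> (6 * D + 4 * r1) * gumbel_s c p b \<kappa>"
    and "gumbel_s c p b \<kappa> > 0"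
proof -
  define I where "I y = integral {y..1} (\<lambda>t. b t / t)" for y
  have r2: "0 \<le> r2" using pb[OF \<kappa>] by auto
  have \<Delta>: "\<bar>I x - I \<kappa>\<bar> \<le> D"
  proof (cases "x \<le> \<kappa>")
    case True
    have "\<bar>I x - I \<kappa> - 0 * (ln \<kappa> - ln x)\<bar> \<le> r2 * (ln \<kappa> - ln x)" unfolding I_def
      by (rule int_split_dev[OF x(1) True]) (use \<kappa> tt bi x pb in auto)
    moreover have "\<bar>ln x - ln \<kappa>\<bar> = ln \<kappa> - ln x" using True x \<kappa> by simp
    ultimately show ?thesis using D by simp
  next
    case False
    have "\<bar>I \<kappa> - I x - 0 * (ln x - ln \<kappa>)\<bar> \<le> r2 * (ln x - ln \<kappa>)" unfolding I_def
      by (rule int_split_dev[OF \<kappa>(1)]) (use False \<kappa> tt bi x pb in auto)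
    moreover have "\<bar>ln x - ln \<kappa>\<bar> = ln x - ln \<kappa>" using False x \<kappa> by simp
    ultimately show ?thesis using D by (simp add: abs_minus_commute)
  qed
  define \<Delta> where "\<Delta> = I x - I \<kappa>"
  have eD: "\<bar>exp \<Delta> - 1\<bar> \<le> 2 * D"
  proof (cases "\<Delta> \<ge> 0")
    case True
    have "norm (exp \<Delta>) \<le> 1 + 2 * norm \<Delta>" using \<Delta> D unfolding \<Delta>_def by (intro exp_bound_lemma) auto
    then show ?thesis using True \<Delta> unfolding \<Delta>_def by auto
  next
    case False
    have "1 + \<Delta> \<le> exp \<Delta>" by simp
    moreover have "exp \<Delta> \<le> 1" using False by simp
    moreover have "\<bar>\<Delta>\<bar> \<le> D" using \<Delta> unfolding \<Delta>_def .
    moreover have "- \<Delta> \<le> \<bar>\<Delta>\<bar>" "0 \<le> \<bar>\<Delta>\<bar>" by auto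
    moreover have "1 - exp \<Delta> \<le> - \<Delta>" using exp_ge_add_one_self[of \<Delta>] by linarith
    moreover have "\<bar>exp \<Delta> - 1\<bar> = 1 - exp \<Delta>" using \<open>exp \<Delta> \<le> 1\<close> by simp
    ultimately show ?thesis by linarith
  qed
  have px: "\<bar>p x\<bar> \<le> r1" and pk: "\<bar>p \<kappa>\<bar> \<le> r1" using pb x \<kappa> by auto
  have sx: "gumbel_s c p b x = c * exp (I \<kappa>) * ((1 + p x) * exp \<Delta>)"
    unfolding gumbel_s_def I_def[symmetric] \<Delta>_def by (simp add: exp_diff)
  have sk: "gumbel_s c p b \<kappa> = c * exp (I \<kappa>) * (1 + p \<kappa>)"
    unfolding gumbel_s_def I_def[symmetric] by simp
  have pos: "c * exp (I \<kappa>) > 0" using c by simp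
  show "gumbel_s c p b \<kappa> > 0" unfolding sk using pos pk r1 by auto
  have "(1 + p x) * exp \<Delta> - (1 + p \<kappa>) = (1 + p x) * (exp \<Delta> - 1) + (p x - p \<kappa>)" by (simp add: algebra_simps)
  then have "\<bar>(1 + p x) * exp \<Delta> - (1 + p \<kappa>)\<bar> \<le> 3/2 * (2 * D) + 2 * r1"
  proof -
    have "\<bar>(1 + p x) * (exp \<Delta> - 1)\<bar> \<le> 3/2 * (2 * D)"
      unfolding abs_mult using px r1 eD by (intro mult_mono) auto
    then show ?thesis using px pk
      by (simp only: \<open>(1 + p x) * exp \<Delta> - (1 + p \<kappa>) = _\<close>)
  qed
  also have "\<dots> \<le> (6 * D + 4 * r1) * (1 + p \<kappa>)"
  proof -
    have "1/2 \<le> 1 + p \<kappa>" using pk r1 by auto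
    moreover have "0 \<le> 6 * D + 4 * r1" using D r2 px by (smt (verit) abs_ge_zero mult_nonneg_nonneg)
    ultimately have "(6 * D + 4 * r1) * (1/2) \<le> (6 * D + 4 * r1) * (1 + p \<kappa>)" by (intro mult_left_mono)
    then show ?thesis by simp
  qed
  finally have "\<bar>(1 + p x) * exp \<Delta> - (1 + p \<kappa>)\<bar> \<le> (6 * D + 4 * r1) * (1 + p \<kappa>)" .
  then have "c * exp (I \<kappa>) * \<bar>(1 + p x) * exp \<Delta> - (1 + p \<kappa>)\<bar> \<le> c * exp (I \<kappa>) * ((6 * D + 4 * r1) * (1 + p \<kappa>))"
    (is "?L \<le> ?R")
    using pos by (intro mult_left_mono) auto
  then show "\<bar>gumbel_s c p b x - gumbel_s c p b \<kappa>\<bar> \<le> (6 * D + 4 * r1) * gumbel_s c p b \<kappa>"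
  proof -
    have "gumbel_s c p b x - gumbel_s c p b \<kappa> = c * exp (I \<kappa>) * ((1 + p x) * exp \<Delta> - (1 + p \<kappa>))"
      unfolding sx sk by (simp add: algebra_simps)
    then have "\<bar>gumbel_s c p b x - gumbel_s c p b \<kappa>\<bar> = c * exp (I \<kappa>) * \<bar>(1 + p x) * exp \<Delta> - (1 + p \<kappa>)\<bar>"
      using pos c by (simp add: abs_mult)
    also have "\<dots> \<le> c * exp (I \<kappa>) * ((6 * D + 4 * r1) * (1 + p \<kappa>))" by fact
    also have "\<dots> = (6 * D + 4 * r1) * gumbel_s c p b \<kappa>" unfolding sk by (simp add: ac_simps)
    finally show ?thesis .
  qed
qed


lemma ln_ge1: "3 \<le> m \<Longrightarrow> 1 \<le> ln (real m)"
proof -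
  assume "3 \<le> m"
  then have "exp 1 \<le> real m" using exp_le by linarith
  then have "ln (exp 1) \<le> ln (real m)" using \<open>3 \<le> m\<close> by (subst ln_le_cancel_iff) auto
  then show ?thesis by simp
qed

lemma good_w:
  fixes u :: "nat \<Rightarrow> real"
  assumes u: "\<And>i. i \<in> {1..n} \<Longrightarrow> u i \<in> {0<..<1}"
    and cnt: "\<not> (\<Sum>i=1..n. indicator {..tt} (u i) :: real) \<le> real kk" and kn: "kk + 1 \<le> n"
  shows "\<And>j. 1 \<le> j \<Longrightarrow> j \<le> n \<Longrightarrow> 0 < ostat n u j \<and> ostat n u j < 1"
    and "ostat n u (Suc kk) \<le> tt"
    and "\<And>j j'. 1 \<le> j \<Longrightarrow> j \<le> j' \<Longrightarrow> j' \<le> n \<Longrightarrow> ostat n u j \<le> ostat n u j'"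
proof -
  show "0 < ostat n u j \<and> ostat n u j < 1" if j1: "1 \<le> j" and j2: "j \<le> n" for j
  proof -
    obtain i where "i \<in> {1..n}" "ostat n u j = u i" using ostat_in[OF j1 j2, of u] by blast
    then show ?thesis using u by auto
  qed
  show "ostat n u (Suc kk) \<le> tt"
  proof (rule ccontr)
    assume "\<not> ostat n u (Suc kk) \<le> tt"
    then have "ostat n u (kk + 1) > tt" by simp
    from ostat_count[OF kn this] cnt show False by simp
  qed
  show "\<And>j j'. 1 \<le> j \<Longrightarrow> j \<le> j' \<Longrightarrow> j' \<le> n \<Longrightarrow> ostat n u j \<le> ostat n u j'" by (rule ostat_mono)
qed

lemma gumbel_omega:
  fixes u :: "nat \<Rightarrow> real" and k :: "nat \<Rightarrow> nat" and F :: "real \<Rightarrow> real"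
  assumes u: "\<And>i. i \<in> {1..n} \<Longrightarrow> u i \<in> {0<..<1}"
    and cnt: "\<not> (\<Sum>i=1..n. indicator {..lam * real (k n) / real n} (u i) :: real) \<le> real (k n)"
    and small: "\<And>i. i \<in> {1..n} \<Longrightarrow> exp (- K) / real n \<le> u i"
    and kk: "3 \<le> k n" "k n + 1 \<le> n" "lam * real (k n) / real n < 1" and lam: "lam > 1" and K: "K \<ge> 0"
    and rep: "Gumbel_rep F c d p b"
    and Gm: "\<And>v v'. 0 < v \<Longrightarrow> v \<le> v' \<Longrightarrow> v' < 1 \<Longrightarrow> Ginv (\<lambda>x. F (exp x)) v \<le> Ginv (\<lambda>x. F (exp x)) v'"
    and f: "\<And>j. j \<ge> 1 \<Longrightarrow> 0 \<le> f j"
    and cu: "dn p b k lam n * ereal ((\<Sum>j=1..k n. f j) / sigman (k n) f) < ereal \<eta>"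
    and VM: "\<bar>Vstar (k n) n u f\<bar> \<le> Mb"
    and \<eta>: "0 \<le> \<eta>" "\<eta> \<le> 1 / (2 * (10 + 6 * ln lam + 6 * K))" and Mb: "0 \<le> Mb"
  shows "\<bar>(Tn (k n) n (\<lambda>i. exp (Ginv (\<lambda>x. F (exp x)) (1 - u i))) f
            - an (k n) f * gumbel_s c p b (real (k n) / real n))
          / (gumbel_s c p b (real (k n) / real n) * sigman (k n) f) - Vstar (k n) n u f\<bar>
         \<le> (10 + 6 * ln lam + 6 * K) * \<eta> * (3 + Mb)"
proof -
  define C where "C = 10 + 6 * ln lam + 6 * K"
  define tt where "tt = lam * real (k n) / real n"
  define \<kappa> where "\<kappa> = real (k n) / real n"
  define s where "s = gumbel_s c p b"
  define G where "G = (\<lambda>x. F (exp x))"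
  define w where "w j = ostat n u j" for j
  define \<sigma> where "\<sigma> = sigman (k n) f"
  define S where "S = (\<Sum>j=1..k n. f j)"
  have lnl: "0 < ln lam" using lam by simp
  have Cpos: "C \<ge> 10" "C \<ge> 2 * (ln lam + 1 + K)" unfolding C_def using lnl K by auto
  have npos: "real n > 0" using kk by simp
  have kpos: "real (k n) \<ge> 3" using kk by simp
  have \<kappa>: "0 < \<kappa>" "\<kappa> \<le> tt" unfolding \<kappa>_def tt_def using npos kpos lam by (auto simp: field_simps)
  have tt: "tt < 1" "0 < tt" using kk \<kappa> unfolding tt_def by auto
  have sig: "0 \<le> \<sigma>" "\<sigma> \<le> an (k n) f" "an (k n) f \<le> S" using sig_an[of "k n" f] f unfolding \<sigma>_def S_def by auto
  have VM': "\<bar>(Vn (k n) n u f - an (k n) f) / \<sigma>\<bar> \<le> Mb" using VM unfolding Vstar_def \<sigma>_def .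
  show ?thesis
  proof (cases "\<sigma> = 0")
    case True
    then show ?thesis using Mb \<eta> Cpos unfolding \<sigma>_def Vstar_def C_def[symmetric] by simp
  next
    case False
    then have sp: "\<sigma> > 0" using sig by simp
    have S1: "1 \<le> S / \<sigma>" using sig sp by simp
    have g1nn: "0 \<le> g1n p k lam n" unfolding g1n_def by (rule SUP_abs_nonneg) (use tt in \<open>simp add: tt_def\<close>)
    have g2nn: "0 \<le> g2n b k lam n" unfolding g2n_def by (rule SUP_abs_nonneg) (use tt in \<open>simp add: tt_def\<close>)
    have dnn: "0 \<le> dn p b k lam n" unfolding dn_def using g1nn by (simp add: le_max_iff_disj)
    obtain r where r: "dn p b k lam n = ereal r" "0 \<le> r" "r * (S / \<sigma>) \<le> \<eta>"
      using ereal_extract[OF dnn S1] cu unfolding S_def \<sigma>_def by blast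
    have r\<eta>: "r \<le> \<eta>"
    proof -
      have "r * 1 \<le> r * (S / \<sigma>)" using r(2) S1 by (intro mult_left_mono)
      then show ?thesis using r(3) by linarith
    qed
    have g1r: "g1n p k lam n \<le> ereal r" using r(1) unfolding dn_def by (metis max.cobounded1)
    have g2r: "g2n b k lam n * ereal (ln (real (k n))) \<le> ereal r" using r(1) unfolding dn_def by (metis max.cobounded2)
    have lk: "1 \<le> ln (real (k n))" using ln_ge1 kk by simp
    obtain r2 where r2: "g2n b k lam n = ereal r2" "0 \<le> r2" "r2 * ln (real (k n)) \<le> r"
    proof (cases "g2n b k lam n")
      case (real x) then show ?thesis using that g2r g2nn by auto
    next
      case PInf then show ?thesis using g2r lk by simp
    next
      case MInf then show ?thesis using g2nn by simp
    qed
    have r2r: "r2 \<le> r"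
    proof -
      have "r2 * 1 \<le> r2 * ln (real (k n))" using r2(2) lk by (intro mult_left_mono)
      then show ?thesis using r2(3) by linarith
    qed
    have pb: "\<bar>p y\<bar> \<le> r \<and> \<bar>b y\<bar> \<le> r2" if "0 < y" "y \<le> tt" for y
    proof -
      have A: "ereal \<bar>p y\<bar> \<le> g1n p k lam n" unfolding g1n_def
        by (rule SUP_abs_ge) (use that tt in \<open>auto simp: tt_def\<close>)
      have B: "ereal \<bar>b y\<bar> \<le> g2n b k lam n" unfolding g2n_def
        by (rule SUP_abs_ge) (use that tt in \<open>auto simp: tt_def\<close>)
      have "ereal \<bar>p y\<bar> \<le> ereal r" using A g1r by (rule order_trans)
      moreover have "ereal \<bar>b y\<bar> \<le> ereal r2" using B r2(1) by simp
      ultimately have "ereal \<bar>p y\<bar> \<le> ereal r" "ereal \<bar>b y\<bar> \<le> ereal r2" by auto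
      then show ?thesis by simp
    qed
    have rC: "r \<le> 1 / (2 * C)" using r\<eta> \<eta> unfolding C_def by simp
    have "1 / (2 * C) \<le> 1/2" using Cpos by (auto simp: field_simps)
    then have rhalf: "r \<le> 1/2" using rC by linarith
    define D where "D = r * (ln lam + 1 + K)"
    have Dh: "D \<le> 1/2"
    proof -
      have "D \<le> (1 / (2 * C)) * (ln lam + 1 + K)" unfolding D_def using rC lnl K
        by (intro mult_right_mono) auto
      also have "\<dots> = (ln lam + 1 + K) / (2 * C)" by simp
      also have "\<dots> \<le> 1/2" using Cpos by (simp add: divide_le_eq)
      finally show ?thesis .
    qed
    have wprops: "\<And>j. 1 \<le> j \<Longrightarrow> j \<le> n \<Longrightarrow> 0 < w j \<and> w j < 1" "w (Suc (k n)) \<le> tt"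
      "\<And>j j'. 1 \<le> j \<Longrightarrow> j \<le> j' \<Longrightarrow> j' \<le> n \<Longrightarrow> w j \<le> w j'"
      using good_w[OF u cnt[folded tt_def] kk(2)] unfolding w_def by auto
    have w1: "exp (- K) / real n \<le> w 1"
    proof -
      have "w 1 \<in> u ` {1..n}" unfolding w_def using ostat_in kk by simp
      then show ?thesis using small by auto
    qed
    have lnb: "r2 * \<bar>ln x - ln \<kappa>\<bar> \<le> D" if x: "x \<in> {w 1..tt}" for x
    proof -
      have xp: "0 < x" using x wprops(1)[of 1] kk by auto
      have a1: "ln x - ln \<kappa> \<le> ln lam"
      proof -
        have "ln x \<le> ln tt" using x xp by auto
        also have "ln tt = ln lam + ln \<kappa>" unfolding tt_def \<kappa>_def using lam npos kpos by (subst times_divide_eq_right[symmetric], subst ln_mult) auto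
        finally show ?thesis by simp
      qed
      have a2: "ln \<kappa> - ln x \<le> ln (real (k n)) + K"
      proof -
        have "exp (- K) / real n \<le> x" using x w1 by auto
        then have "ln (exp (- K) / real n) \<le> ln x" using npos xp by (subst ln_le_cancel_iff) auto
        then have "- K - ln (real n) \<le> ln x" using npos by (simp add: ln_div)
        moreover have "ln \<kappa> = ln (real (k n)) - ln (real n)" unfolding \<kappa>_def using npos kpos by (simp add: ln_div)
        ultimately show ?thesis by simp
      qed
      have "\<bar>ln x - ln \<kappa>\<bar> \<le> ln lam + ln (real (k n)) + K" using a1 a2 lnl lk K by auto
      then have "r2 * \<bar>ln x - ln \<kappa>\<bar> \<le> r2 * (ln lam + ln (real (k n)) + K)" using r2 by (intro mult_left_mono) auto
      also have "\<dots> = r2 * ln lam + r2 * ln (real (k n)) + r2 * K" by (simp add: algebra_simps)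
      also have "\<dots> \<le> r * ln lam + r + r * K"
      proof -
        have "r2 * ln lam \<le> r * ln lam" using r2r lnl by (intro mult_right_mono) auto
        moreover have "r2 * K \<le> r * K" using r2r K by (intro mult_right_mono) auto
        ultimately show ?thesis using r2(3) by linarith
      qed
      finally show ?thesis unfolding D_def by (simp add: algebra_simps)
    qed
    have rep': "c > 0" "\<forall>u\<in>{0<..<1}. (\<lambda>t. b t / t) integrable_on {u..1}"
      "\<forall>x\<in>{0<..<1}. (\<lambda>t. s t / t) integrable_on {x..1} \<and> Ginv G (1 - x) = d - s x + integral {x..1} (\<lambda>t. s t / t)"
      using rep unfolding Gumbel_rep_def s_def G_def by auto
    have s0: "s \<kappa> > 0"
    proof -
      have "0 \<le> D" unfolding D_def using r lnl K by auto
      then show ?thesis using gumbel_s_bound(2)[OF rep'(1,2) \<kappa> tt(1) \<kappa>(1) \<kappa>(2) pb rhalf, of D] Dh unfolding s_def by auto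
    qed
    have sb: "\<bar>s x - s \<kappa>\<bar> \<le> (C * r) * s \<kappa>" if x: "x \<in> {w 1..w (Suc (k n))}" for x
    proof -
      have xt: "x \<in> {w 1..tt}" using x wprops(2) by auto
      have xp: "0 < x" using x wprops(1)[of 1] kk by auto
      have "\<bar>s x - s \<kappa>\<bar> \<le> (6 * D + 4 * r) * s \<kappa>"
        using gumbel_s_bound(1)[OF rep'(1,2) \<kappa> tt(1) xp _ pb rhalf lnb[OF xt] Dh] xt unfolding s_def by auto
      also have "6 * D + 4 * r = C * r" unfolding D_def C_def by (simp add: algebra_simps)
      finally show ?thesis .
    qed
    have wdet: "\<And>j. j \<in> {1..k n} \<Longrightarrow> 0 < w j \<and> w j \<le> w (Suc j) \<and> w (Suc j) < 1"
      using wprops kk by auto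
    have wmono: "\<And>j. j \<in> {1..Suc (k n)} \<Longrightarrow> w 1 \<le> w j \<and> w j \<le> w (Suc (k n))"
      using wprops(3) kk by auto
    have det: "\<bar>(\<Sum>j=1..k n. f j * (Ginv G (1 - w j) - Ginv G (1 - w (Suc j)))) - s \<kappa> * (\<Sum>j=1..k n. f j * ln (w (Suc j) / w j))\<bar>
       \<le> (C * r) * s \<kappa> * (2 * (\<Sum>j=1..k n. f j) + (\<Sum>j=1..k n. f j * ln (w (Suc j) / w j)))"
      by (rule gumbel_det[where Q="\<lambda>x. Ginv G (1 - x)", OF rep'(3) wdet sb wmono]) (use f in auto)
    have Teq: "Tn (k n) n (\<lambda>i. exp (Ginv G (1 - u i))) f = (\<Sum>j=1..k n. f j * (Ginv G (1 - w j) - Ginv G (1 - w (Suc j))))"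
      unfolding w_def by (rule Tn_rep[OF u kk(2)]) (use Gm in \<open>auto simp: G_def\<close>)
    have Veq: "Vn (k n) n u f = (\<Sum>j=1..k n. f j * ln (w (Suc j) / w j))"
      unfolding w_def by (rule Vn_rep[OF kk(2)])
    have "\<bar>(Tn (k n) n (\<lambda>i. exp (Ginv G (1 - u i))) f - an (k n) f * s \<kappa>) / (s \<kappa> * \<sigma>)
          - (Vn (k n) n u f - an (k n) f) / \<sigma>\<bar> \<le> C * \<eta> * (3 + Mb)"
    proof (rule gumbel_alg[OF sig _ VM' s0])
      show "\<bar>Tn (k n) n (\<lambda>i. exp (Ginv G (1 - u i))) f - s \<kappa> * Vn (k n) n u f\<bar>
          \<le> C * r * s \<kappa> * (2 * S + Vn (k n) n u f)" using det unfolding Teq Veq S_def .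
      show "0 \<le> C * r" using Cpos r by simp
      show "C * r \<le> C * r" ..
      show "0 \<le> r" by fact
      show "0 < \<sigma> \<Longrightarrow> r * (S / \<sigma>) \<le> \<eta>" using r by simp
      show "0 \<le> \<eta>" "0 \<le> Mb" "0 \<le> C" using \<eta> Mb Cpos by auto
    qed
    then show ?thesis unfolding Vstar_def \<sigma>_def[symmetric] C_def[symmetric] s_def[symmetric] \<kappa>_def[symmetric] G_def[symmetric] .
  qed
qed


lemma frechet_omega:
  fixes u :: "nat \<Rightarrow> real" and k :: "nat \<Rightarrow> nat" and F :: "real \<Rightarrow> real"
  assumes u: "\<And>i. i \<in> {1..n} \<Longrightarrow> u i \<in> {0<..<1}"
    and cnt: "\<not> (\<Sum>i=1..n. indicator {..lam * real (k n) / real n} (u i) :: real) \<le> real (k n)"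
    and kk: "1 \<le> k n" "k n + 1 \<le> n" "lam * real (k n) / real n < 1" and lam: "lam > 1"
    and rep: "Frechet_rep F \<gamma> c p b" and \<gamma>: "\<gamma> > 0"
    and Gm: "\<And>v v'. 0 < v \<Longrightarrow> v \<le> v' \<Longrightarrow> v' < 1 \<Longrightarrow> Ginv (\<lambda>x. F (exp x)) v \<le> Ginv (\<lambda>x. F (exp x)) v'"
    and f: "\<And>j. j \<ge> 1 \<Longrightarrow> 0 \<le> f j"
    and cu1: "g1n p k lam n * ereal ((\<Sum>j=1..k n. f j) / sigman (k n) f) < ereal \<eta>"
    and cu2: "g2n b k lam n * ereal ((\<Sum>j=1..k n. f j) / sigman (k n) f) < ereal \<eta>"
    and VM: "\<bar>Vstar (k n) n u f\<bar> \<le> Mb"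
    and \<eta>: "0 \<le> \<eta>" "\<eta> \<le> 1/2" and Mb: "0 \<le> Mb"
  shows "\<bar>an (k n) f / sigman (k n) f * (Tn (k n) n (\<lambda>i. exp (Ginv (\<lambda>x. F (exp x)) (1 - u i))) f / an (k n) f - \<gamma>)
             - \<gamma> * Vstar (k n) n u f\<bar> \<le> 4 * \<eta> + \<eta> * Mb + \<eta>"
proof -
  define tt where "tt = lam * real (k n) / real n"
  define G where "G = (\<lambda>x. F (exp x))"
  define w where "w j = ostat n u j" for j
  define \<sigma> where "\<sigma> = sigman (k n) f"
  define S where "S = (\<Sum>j=1..k n. f j)"
  have npos: "real n > 0" using kk by simp
  have tt: "tt < 1" "0 < tt" using kk lam npos unfolding tt_def by auto
  have sig: "0 \<le> \<sigma>" "\<sigma> \<le> an (k n) f" "an (k n) f \<le> S" using sig_an[of "k n" f] f unfolding \<sigma>_def S_def by auto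
  have VM': "\<bar>(Vn (k n) n u f - an (k n) f) / \<sigma>\<bar> \<le> Mb" using VM unfolding Vstar_def \<sigma>_def .
  have wprops: "\<And>j. 1 \<le> j \<Longrightarrow> j \<le> n \<Longrightarrow> 0 < w j \<and> w j < 1" "w (Suc (k n)) \<le> tt"
    "\<And>j j'. 1 \<le> j \<Longrightarrow> j \<le> j' \<Longrightarrow> j' \<le> n \<Longrightarrow> w j \<le> w j'"
    using good_w[OF u cnt[folded tt_def] kk(2)] unfolding w_def by auto
  have wdet: "\<And>j. j \<in> {1..k n} \<Longrightarrow> 0 < w j \<and> w j \<le> w (Suc j) \<and> w (Suc j) \<le> tt"
  proof -
    fix j assume j: "j \<in> {1..k n}"
    have A: "w (Suc j) \<le> w (Suc (k n))" using j kk by (intro wprops(3)) auto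
    have B: "w (Suc j) \<le> tt" using A wprops(2) by linarith
    have C: "w j \<le> w (Suc j)" "0 < w j" using j kk wprops(1)[of j] wprops(3)[of j "Suc j"] by auto
    show "0 < w j \<and> w j \<le> w (Suc j) \<and> w (Suc j) \<le> tt" using B C by auto
  qed
  have rep': "\<forall>x\<in>{0<..<1}. (\<lambda>t. b t / t) integrable_on {x..1} \<and>
        Ginv G (1 - x) = ln c + ln (1 + p x) - \<gamma> * ln x + integral {x..1} (\<lambda>t. b t / t)"
    using rep unfolding Frechet_rep_def G_def by auto
  have Teq: "Tn (k n) n (\<lambda>i. exp (Ginv G (1 - u i))) f = (\<Sum>j=1..k n. f j * (Ginv G (1 - w j) - Ginv G (1 - w (Suc j))))"
    unfolding w_def by (rule Tn_rep[OF u kk(2)]) (use Gm in \<open>auto simp: G_def\<close>)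
  have Veq: "Vn (k n) n u f = (\<Sum>j=1..k n. f j * ln (w (Suc j) / w j))"
    unfolding w_def by (rule Vn_rep[OF kk(2)])
  show ?thesis
  proof (cases "\<sigma> = 0")
    case True
    then show ?thesis using Mb \<eta> unfolding \<sigma>_def Vstar_def by simp
  next
    case False
    then have sp: "\<sigma> > 0" using sig by simp
    have S1: "1 \<le> S / \<sigma>" using sig sp by simp
    have g1nn: "0 \<le> g1n p k lam n" unfolding g1n_def by (rule SUP_abs_nonneg) (use tt in \<open>simp add: tt_def\<close>)
    have g2nn: "0 \<le> g2n b k lam n" unfolding g2n_def by (rule SUP_abs_nonneg) (use tt in \<open>simp add: tt_def\<close>)
    obtain r1 where r1: "g1n p k lam n = ereal r1" "0 \<le> r1" "r1 * (S / \<sigma>) \<le> \<eta>"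
      using ereal_extract[OF g1nn S1] cu1 unfolding S_def \<sigma>_def by blast
    obtain r2 where r2: "g2n b k lam n = ereal r2" "0 \<le> r2" "r2 * (S / \<sigma>) \<le> \<eta>"
      using ereal_extract[OF g2nn S1] cu2 unfolding S_def \<sigma>_def by blast
    have r1h: "r1 \<le> 1/2"
    proof -
      have "r1 * 1 \<le> r1 * (S / \<sigma>)" using r1(2) S1 by (intro mult_left_mono)
      then show ?thesis using r1(3) \<eta> by linarith
    qed
    have pb: "\<bar>p y\<bar> \<le> r1 \<and> \<bar>b y\<bar> \<le> r2" if "0 < y" "y \<le> tt" for y
    proof -
      have A: "ereal \<bar>p y\<bar> \<le> g1n p k lam n" unfolding g1n_def
        by (rule SUP_abs_ge) (use that tt in \<open>auto simp: tt_def\<close>)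
      have B: "ereal \<bar>b y\<bar> \<le> g2n b k lam n" unfolding g2n_def
        by (rule SUP_abs_ge) (use that tt in \<open>auto simp: tt_def\<close>)
      show ?thesis using A B r1(1) r2(1) by simp
    qed
    have det: "\<bar>(\<Sum>j=1..k n. f j * (Ginv G (1 - w j) - Ginv G (1 - w (Suc j)))) - \<gamma> * (\<Sum>j=1..k n. f j * ln (w (Suc j) / w j))\<bar>
       \<le> 4 * r1 * (\<Sum>j=1..k n. f j) + r2 * (\<Sum>j=1..k n. f j * ln (w (Suc j) / w j))"
      by (rule frechet_det[where Q="\<lambda>x. Ginv G (1 - x)" and b=b and c=c and p=p and \<gamma>=\<gamma> and k="k n" and wn=w and tt=tt, OF rep' wdet tt(1) pb r1h]) (use f in auto)
    have "\<bar>an (k n) f / \<sigma> * (Tn (k n) n (\<lambda>i. exp (Ginv G (1 - u i))) f / an (k n) f - \<gamma>)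
          - \<gamma> * ((Vn (k n) n u f - an (k n) f) / \<sigma>)\<bar> \<le> 4 * \<eta> + \<eta> * Mb + \<eta>"
    proof (rule frechet_alg[OF sig _ VM' r1(2) r2(2) \<gamma>])
      show "\<bar>Tn (k n) n (\<lambda>i. exp (Ginv G (1 - u i))) f - \<gamma> * Vn (k n) n u f\<bar>
          \<le> 4 * r1 * S + r2 * Vn (k n) n u f" using det unfolding Teq Veq S_def .
    qed (use r1 r2 \<eta> Mb in auto)
    then show ?thesis unfolding Vstar_def \<sigma>_def[symmetric] G_def[symmetric] .
  qed
qed


lemma outer_prob_cover:
  assumes B: "B \<in> sets M" and S: "S \<subseteq> space M" and A: "A \<subseteq> B \<union> S"
  shows "outer_prob M A \<le> measure M B + outer_prob M S"
proof -
  have "outer_prob M A - measure M B \<le> outer_prob M S"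
    unfolding outer_prob_def[of M S]
  proof (rule cInf_greatest)
    show "{measure M C |C. C \<in> sets M \<and> S \<subseteq> C} \<noteq> {}" using S by blast
    fix x assume "x \<in> {measure M C |C. C \<in> sets M \<and> S \<subseteq> C}"
    then obtain C where C: "x = measure M C" "C \<in> sets M" "S \<subseteq> C" by blast
    have "outer_prob M A \<le> measure M (B \<union> C)" by (rule outer_prob_le_measure) (use B C A in auto)
    also have "\<dots> \<le> measure M B + measure M C" by (rule measure_Un_le[OF B C(2)])
    finally show "outer_prob M A - measure M B \<le> x" using C by simp
  qed
  then show ?thesis by simp
qed

lemma assemble:
  fixes Z :: "nat \<Rightarrow> 'a \<Rightarrow> ereal"
  assumes main: "\<And>e \<delta>. e > 0 \<Longrightarrow> \<delta> > 0 \<Longrightarrow> \<exists>N. \<forall>n\<ge>N. \<exists>B S. B \<in> sets M \<and> measure M B < \<delta> \<and>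
      S \<subseteq> space M \<and> outer_prob M S < \<delta> \<and> {\<omega>\<in>space M. Z n \<omega> > ereal e} \<subseteq> B \<union> S"
  shows "conv_outer_prob M Z"
  unfolding conv_outer_prob_def
proof (intro allI impI)
  fix e :: real assume e: "e > 0"
  show "(\<lambda>n. outer_prob M {\<omega>\<in>space M. Z n \<omega> > ereal e}) \<longlonglongrightarrow> 0"
  proof (rule LIMSEQ_I)
    fix \<delta> :: real assume d: "\<delta> > 0"
    obtain N where N: "\<forall>n\<ge>N. \<exists>B S. B \<in> sets M \<and> measure M B < \<delta>/2 \<and>
      S \<subseteq> space M \<and> outer_prob M S < \<delta>/2 \<and> {\<omega>\<in>space M. Z n \<omega> > ereal e} \<subseteq> B \<union> S"
      using main[OF e, of "\<delta>/2"] d by auto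
    show "\<exists>no. \<forall>n\<ge>no. norm (outer_prob M {\<omega>\<in>space M. Z n \<omega> > ereal e} - 0) < \<delta>"
    proof (intro exI allI impI)
      fix n assume "N \<le> n"
      then obtain B S where BS: "B \<in> sets M" "measure M B < \<delta>/2" "S \<subseteq> space M" "outer_prob M S < \<delta>/2"
        "{\<omega>\<in>space M. Z n \<omega> > ereal e} \<subseteq> B \<union> S" using N by blast
      have "outer_prob M {\<omega>\<in>space M. Z n \<omega> > ereal e} \<le> measure M B + outer_prob M S"
        by (rule outer_prob_cover[OF BS(1,3,5)])
      moreover have "0 \<le> outer_prob M {\<omega>\<in>space M. Z n \<omega> > ereal e}" by (rule outer_prob_nonneg) auto
      ultimately show "norm (outer_prob M {\<omega>\<in>space M. Z n \<omega> > ereal e} - 0) < \<delta>" using BS by simp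
    qed
  qed
qed

lemma binom_small:
  fixes lam \<delta> :: real
  assumes lam: "lam > 1" and d: "\<delta> > 0" and kk: "real kk > 2 * lam / ((lam - 1)\<^sup>2 * \<delta>)"
  shows "lam * real kk / (lam * real kk - real kk)\<^sup>2 < \<delta> / 2"
proof -
  define q where "q = (lam - 1)\<^sup>2"
  have l1: "q > 0" using lam unfolding q_def by simp
  have pos: "2 * lam / (q * \<delta>) > 0" using l1 d lam by simp
  have kp: "real kk > 0" using kk pos unfolding q_def by linarith
  have A: "2 * lam < real kk * (q * \<delta>)" using kk l1 d unfolding q_def[symmetric] by (simp add: divide_less_eq)
  have B: "(lam * real kk - real kk)\<^sup>2 = q * real kk * real kk"
    unfolding q_def by (simp add: power2_eq_square algebra_simps)
  have "lam * real kk / (lam * real kk - real kk)\<^sup>2 = lam / (q * real kk)"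
    unfolding B using kp l1 by simp
  also have "\<dots> < \<delta> / 2"
    using A kp l1 d by (simp add: divide_less_eq mult.commute mult.left_commute)
  finally show ?thesis .
qed

lemma exp_small:
  fixes \<delta> :: real assumes "\<delta> > 0"
  shows "\<exists>K::real. K \<ge> 0 \<and> exp (- K) < \<delta> / 2"
proof -
  obtain K :: nat where K: "2 / \<delta> < real K" using reals_Archimedean2 by blast
  have "1 + real K \<le> exp (real K)" by simp
  then have "2 / \<delta> < exp (real K)" using K by linarith
  then have "exp (- real K) < \<delta> / 2" using assms
    by (simp add: exp_minus field_simps)
  then show ?thesis by (intro exI[of _ "real K"]) auto
qed


theorem corollary2:
  fixes M :: "'a measure" and U :: "nat \<Rightarrow> 'a \<Rightarrow> real" and F :: "real \<Rightarrow> real"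
    and k :: "nat \<Rightarrow> nat" and Fa :: "(nat \<Rightarrow> real) set"
  assumes P: "prob_space M"
    and indep: "prob_space.indep_vars M (\<lambda>_. borel) U {1..}"
    and unif: "\<forall>i\<ge>1. distr M borel (U i) = uniform_measure lborel {0<..<1}"
    and F_mono: "mono F"
    and F_rc: "\<forall>x. continuous (at_right x) F"
    and F_bot: "(F \<longlongrightarrow> 0) at_bot"
    and F_top: "(F \<longlongrightarrow> 1) at_top"
    and F_gt1: "F 1 = 0"
    and k_bounds: "\<forall>n\<ge>1. 1 \<le> k n \<and> k n \<le> n"
    and k_inf: "filterlim k at_top sequentially"
    and k_small: "(\<lambda>n. real (k n) / real n) \<longlonglongrightarrow> 0"
    and Fa_ne: "Fa \<noteq> {}"
    and Fa_pos: "\<forall>f\<in>Fa. \<forall>j\<ge>1. f j \<ge> 0"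
    and KU: "KU1 Fa \<or> (KU2a Fa k \<and> KU2b Fa k)"
    and weak: "weak_conv_linf M Fa (Vproc Fa k U)"
  shows
    "(domain_Gumbel F \<longrightarrow>
       (\<forall>c d p b lam. Gumbel_rep F c d p b \<and> lam > 1 \<and> CU3 Fa k p b lam \<longrightarrow>
          conv_outer_prob M (\<lambda>n \<omega>. SUP f\<in>Fa. ereal \<bar>
             (Tn (k n) n (Xsample F U \<omega>) f - an (k n) f * gumbel_s c p b (real (k n) / real n))
               / (gumbel_s c p b (real (k n) / real n) * sigman (k n) f)
             - Vstar (k n) n (\<lambda>i. U i \<omega>) f\<bar>))) \<and>
     (\<forall>\<gamma>>0. domain_Frechet F \<gamma> \<longrightarrow>
       (\<forall>c p b lam. Frechet_rep F \<gamma> c p b \<and> lam > 1 \<and> CU1 Fa k p lam \<and> CU2 Fa k b lam \<longrightarrow>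
          conv_outer_prob M (\<lambda>n \<omega>. SUP f\<in>Fa. ereal \<bar>
             an (k n) f / sigman (k n) f * (Tn (k n) n (Xsample F U \<omega>) f / an (k n) f - \<gamma>)
             - \<gamma> * Vstar (k n) n (\<lambda>i. U i \<omega>) f\<bar>)))"
proof -
  interpret unifs M U unfolding unifs_def unifs_axioms_def using P indep unif by auto
  have Gm: "\<And>v v'. 0 < v \<Longrightarrow> v \<le> v' \<Longrightarrow> v' < 1 \<Longrightarrow> Ginv (\<lambda>x. F (exp x)) v \<le> Ginv (\<lambda>x. F (exp x)) v'"
    using Ginv_mono[OF F_mono F_top F_gt1] by blast
  have Xeq: "\<And>\<omega>. Xsample F U \<omega> = (\<lambda>i. exp (Ginv (\<lambda>x. F (exp x)) (1 - U i \<omega>)))"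
    by (rule ext) (simp add: Xsample_def)
  have fpos: "\<And>f j. f \<in> Fa \<Longrightarrow> 1 \<le> j \<Longrightarrow> 0 \<le> f j" using Fa_pos by auto
  have kreal: "filterlim (\<lambda>n. real (k n)) at_top sequentially"
    using filterlim_compose[OF filterlim_real_sequentially k_inf] by simp
  have evlinf: "\<forall>\<^sub>F n in sequentially. \<forall>\<omega>\<in>space M. Vproc Fa k U n \<omega> \<in> linf Fa"
    using weak unfolding weak_conv_linf_def by blast
  have VMb: "\<bar>Vstar (k n) n (\<lambda>i. U i \<omega>) f\<bar> \<le> mm"
    if "Vproc Fa k U n \<omega> \<in> linf Fa" "\<not> supdist Fa (Vproc Fa k U n \<omega>) (\<lambda>_. 0) > mm" "f \<in> Fa" for n \<omega> f mm
  proof -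
    have "\<bar>Vproc Fa k U n \<omega> f - 0\<bar> \<le> supdist Fa (Vproc Fa k U n \<omega>) (\<lambda>_. 0)"
      by (rule supdist_ge[OF that(1) zero_linf that(3)])
    then show ?thesis using that(2,3) unfolding Vproc_def by simp
  qed
  have kn_ev: "\<forall>\<^sub>F n in sequentially. 1 \<le> n \<and> 3 \<le> k n \<and> k n + 1 \<le> n \<and> lam * real (k n) / real n < 1"
    if lam: "lam > 1" for lam :: real
  proof -
    have "\<forall>\<^sub>F n in sequentially. real (k n) / real n < 1 / lam"
      using order_tendstoD(2)[OF k_small] lam by simp
    moreover have "\<forall>\<^sub>F n in sequentially. 2 < real (k n)"
      using kreal unfolding filterlim_at_top_dense by blast
    moreover have "\<forall>\<^sub>F n in sequentially. 1 \<le> n" by (rule eventually_ge_at_top)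
    ultimately show ?thesis
    proof eventually_elim
      case (elim n)
      then have np: "real n > 0" by simp
      have "lam * (real (k n) / real n) < lam * (1 / lam)" using elim lam by (intro mult_strict_left_mono) auto
      then have l: "lam * real (k n) / real n < 1" using lam by simp
      have "real (k n) / real n < 1" using elim lam by (smt (verit) divide_le_eq_1 le_divide_eq_1)
      then have "real (k n) < real n" using np by (simp add: divide_less_eq)
      then show ?case using elim l by auto
    qed
  qed
  have binom_ev: "\<forall>\<^sub>F n in sequentially. prob {\<omega>\<in>space M. (\<Sum>i=1..n. indicator {..lam * real (k n) / real n} (U i \<omega>) :: real) \<le> real (k n)} < \<delta>/2"
    if lam: "lam > 1" and d: "\<delta> > 0" for lam \<delta> :: real
  proof -
    have "\<forall>\<^sub>F n in sequentially. 2 * lam / ((lam - 1)\<^sup>2 * \<delta>) < real (k n)"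
      using kreal unfolding filterlim_at_top_dense by blast
    with kn_ev[OF lam] show ?thesis
    proof eventually_elim
      case (elim n)
      define t where "t = lam * real (k n) / real n"
      have np: "real n > 0" using elim by simp
      have nt: "real n * t = lam * real (k n)" unfolding t_def using np by simp
      have t: "0 < t" "t < 1" using elim lam np unfolding t_def by auto
      have kt: "real (k n) < real n * t" unfolding nt using lam elim by simp
      have "prob {\<omega>\<in>space M. (\<Sum>i=1..n. indicator {..t} (U i \<omega>) :: real) \<le> real (k n)} \<le> real n * t / (real n * t - real (k n))\<^sup>2"
        by (rule binom_tail[OF t kt])
      also have "\<dots> < \<delta>/2" unfolding nt by (rule binom_small[OF lam d elim(2)])
      finally show ?case unfolding t_def .
    qed
  qed
  have B0m: "prob {\<omega>\<in>space M. \<exists>i\<in>{1..n}. U i \<omega> \<notin> {0<..<1}} = 0" for n by (rule prob_some_out)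
  have B2m: "prob {\<omega>\<in>space M. \<exists>i\<in>{1..n}. U i \<omega> < exp (- K) / real n} < \<delta>/2"
    if "1 \<le> n" "K \<ge> 0" "exp (- K) < \<delta>/2" for n K \<delta>
  proof -
    have np: "real n > 0" using that by simp
    have "exp (- K) \<le> 1" using that by simp
    moreover have "1 \<le> real n" using that by simp
    ultimately have "exp (- K) \<le> real n" by linarith
    then have x: "0 \<le> exp (- K) / real n" "exp (- K) / real n \<le> 1" using np
      by (auto simp: divide_le_eq)
    have "prob {\<omega>\<in>space M. \<exists>i\<in>{1..n}. U i \<omega> < exp (- K) / real n} \<le> real n * (exp (- K) / real n)"
      by (rule prob_some_small[OF x])
    also have "\<dots> = exp (- K)" using np by simp
    finally show ?thesis using that by simp
  qed
  show ?thesis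
  proof (intro conjI impI allI)
    fix c d p b lam
    assume "domain_Gumbel F" and H: "Gumbel_rep F c d p b \<and> lam > 1 \<and> CU3 Fa k p b lam"
    then have rep: "Gumbel_rep F c d p b" and lam: "lam > 1" and cu: "CU3 Fa k p b lam" by auto
    show "conv_outer_prob M (\<lambda>n \<omega>. SUP f\<in>Fa. ereal \<bar>
             (Tn (k n) n (Xsample F U \<omega>) f - an (k n) f * gumbel_s c p b (real (k n) / real n))
               / (gumbel_s c p b (real (k n) / real n) * sigman (k n) f)
             - Vstar (k n) n (\<lambda>i. U i \<omega>) f\<bar>)"
    proof (rule assemble)
      fix e \<delta> :: real assume e: "e > 0" and d: "\<delta> > 0"
      obtain m where m: "\<forall>\<^sub>F n in sequentially. outer_prob M {\<omega>\<in>space M. supdist Fa (Vproc Fa k U n \<omega>) (\<lambda>_. 0) > m + 1} < \<delta>"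
        using tightness[OF P Fa_ne weak d] by blast
      define Mb where "Mb = max 0 (m + 1)"
      have Mb: "0 \<le> Mb" "m + 1 \<le> Mb" unfolding Mb_def by auto
      obtain K where K: "K \<ge> 0" "exp (- K) < \<delta>/2" using exp_small[OF d] by blast
      define C where "C = 10 + 6 * ln lam + 6 * K"
      have "0 < ln lam" using lam by simp
      then have Cp: "C > 0" using K unfolding C_def by linarith
      define \<eta> where "\<eta> = min (1 / (2 * C)) (e / (2 * C * (3 + Mb)))"
      have \<eta>: "0 < \<eta>" "\<eta> \<le> 1 / (2 * C)" unfolding \<eta>_def using Cp e Mb by auto
      have \<eta>e: "C * \<eta> * (3 + Mb) \<le> e / 2"
      proof -
        have "C * \<eta> * (3 + Mb) \<le> C * (e / (2 * C * (3 + Mb))) * (3 + Mb)"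
          using Cp Mb unfolding \<eta>_def by (intro mult_right_mono mult_left_mono) auto
        also have "\<dots> = e / 2"
        proof -
          define X where "X = C * (3 + Mb)"
          have X: "X > 0" unfolding X_def using Cp Mb by simp
          have "C * (e / (2 * C * (3 + Mb))) * (3 + Mb) = X * (e / (2 * X))" unfolding X_def by (simp add: ac_simps)
          also have "\<dots> = e / 2" using X by simp
          finally show ?thesis .
        qed
        finally show ?thesis .
      qed
      have ev: "\<forall>\<^sub>F n in sequentially. (1 \<le> n \<and> 3 \<le> k n \<and> k n + 1 \<le> n \<and> lam * real (k n) / real n < 1) \<and>
          prob {\<omega>\<in>space M. (\<Sum>i=1..n. indicator {..lam * real (k n) / real n} (U i \<omega>) :: real) \<le> real (k n)} < \<delta>/2 \<and>
          outer_prob M {\<omega>\<in>space M. supdist Fa (Vproc Fa k U n \<omega>) (\<lambda>_. 0) > m + 1} < \<delta> \<and>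
          (\<forall>f\<in>Fa. dn p b k lam n * ereal ((\<Sum>j=1..k n. f j) / sigman (k n) f) < ereal \<eta>) \<and>
          (\<forall>\<omega>\<in>space M. Vproc Fa k U n \<omega> \<in> linf Fa)"
        using kn_ev[OF lam] binom_ev[OF lam d] m CU_elim[OF cu[unfolded CU3_def] \<eta>(1)] evlinf
        by eventually_elim blast
      then obtain N where N: "\<And>n. n \<ge> N \<Longrightarrow> (1 \<le> n \<and> 3 \<le> k n \<and> k n + 1 \<le> n \<and> lam * real (k n) / real n < 1) \<and>
          prob {\<omega>\<in>space M. (\<Sum>i=1..n. indicator {..lam * real (k n) / real n} (U i \<omega>) :: real) \<le> real (k n)} < \<delta>/2 \<and>
          outer_prob M {\<omega>\<in>space M. supdist Fa (Vproc Fa k U n \<omega>) (\<lambda>_. 0) > m + 1} < \<delta> \<and>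
          (\<forall>f\<in>Fa. dn p b k lam n * ereal ((\<Sum>j=1..k n. f j) / sigman (k n) f) < ereal \<eta>) \<and>
          (\<forall>\<omega>\<in>space M. Vproc Fa k U n \<omega> \<in> linf Fa)"
        unfolding eventually_sequentially by blast
      show "\<exists>N. \<forall>n\<ge>N. \<exists>B S. B \<in> sets M \<and> measure M B < \<delta> \<and> S \<subseteq> space M \<and> outer_prob M S < \<delta> \<and>
          {\<omega> \<in> space M. ereal e < (SUP f\<in>Fa. ereal \<bar>(Tn (k n) n (Xsample F U \<omega>) f - an (k n) f * gumbel_s c p b (real (k n) / real n))
               / (gumbel_s c p b (real (k n) / real n) * sigman (k n) f) - Vstar (k n) n (\<lambda>i. U i \<omega>) f\<bar>)} \<subseteq> B \<union> S"
      proof (rule exI[of _ N], intro allI impI)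
        fix n assume "N \<le> n"
        note Nn = N[OF this]
        define B0 where "B0 = {\<omega>\<in>space M. \<exists>i\<in>{1..n}. U i \<omega> \<notin> {0<..<1}}"
        define B1 where "B1 = {\<omega>\<in>space M. (\<Sum>i=1..n. indicator {..lam * real (k n) / real n} (U i \<omega>) :: real) \<le> real (k n)}"
        define B2 where "B2 = {\<omega>\<in>space M. \<exists>i\<in>{1..n}. U i \<omega> < exp (- K) / real n}"
        define S where "S = {\<omega>\<in>space M. supdist Fa (Vproc Fa k U n \<omega>) (\<lambda>_. 0) > m + 1}"
        have sets: "B0 \<in> events" "B1 \<in> events" "B2 \<in> events" unfolding B0_def B1_def B2_def by (rule sets_some_small)+
        show "\<exists>B S. B \<in> sets M \<and> measure M B < \<delta> \<and> S \<subseteq> space M \<and> outer_prob M S < \<delta> \<and>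
          {\<omega> \<in> space M. ereal e < (SUP f\<in>Fa. ereal \<bar>(Tn (k n) n (Xsample F U \<omega>) f - an (k n) f * gumbel_s c p b (real (k n) / real n))
               / (gumbel_s c p b (real (k n) / real n) * sigman (k n) f) - Vstar (k n) n (\<lambda>i. U i \<omega>) f\<bar>)} \<subseteq> B \<union> S"
        proof (intro exI conjI)
          show "B0 \<union> B1 \<union> B2 \<in> sets M" using sets by auto
          have "prob (B0 \<union> B1 \<union> B2) \<le> prob (B0 \<union> B1) + prob B2" using sets by (intro measure_Un_le) auto
          also have "\<dots> \<le> prob B0 + prob B1 + prob B2" using sets measure_Un_le[of B0 M B1] by auto
          also have "\<dots> < \<delta>" using B0m[of n] Nn B2m[of n K \<delta>] K unfolding B0_def B1_def B2_def by auto
          finally show "prob (B0 \<union> B1 \<union> B2) < \<delta>" .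
          show "S \<subseteq> space M" unfolding S_def by auto
          show "outer_prob M S < \<delta>" using Nn unfolding S_def by auto
          show "{\<omega> \<in> space M. ereal e < (SUP f\<in>Fa. ereal \<bar>(Tn (k n) n (Xsample F U \<omega>) f - an (k n) f * gumbel_s c p b (real (k n) / real n))
               / (gumbel_s c p b (real (k n) / real n) * sigman (k n) f) - Vstar (k n) n (\<lambda>i. U i \<omega>) f\<bar>)} \<subseteq> B0 \<union> B1 \<union> B2 \<union> S"
          proof
            fix \<omega> assume \<omega>: "\<omega> \<in> {\<omega> \<in> space M. ereal e < (SUP f\<in>Fa. ereal \<bar>(Tn (k n) n (Xsample F U \<omega>) f - an (k n) f * gumbel_s c p b (real (k n) / real n))
               / (gumbel_s c p b (real (k n) / real n) * sigman (k n) f) - Vstar (k n) n (\<lambda>i. U i \<omega>) f\<bar>)}"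
            show "\<omega> \<in> B0 \<union> B1 \<union> B2 \<union> S"
            proof (rule ccontr)
              assume nb: "\<omega> \<notin> B0 \<union> B1 \<union> B2 \<union> S"
              have sp: "\<omega> \<in> space M" using \<omega> by auto
              have u: "\<And>i. i \<in> {1..n} \<Longrightarrow> U i \<omega> \<in> {0<..<1}" using nb sp unfolding B0_def by auto
              have cnt: "\<not> (\<Sum>i=1..n. indicator {..lam * real (k n) / real n} (U i \<omega>) :: real) \<le> real (k n)"
                using nb sp unfolding B1_def by auto
              have small: "\<And>i. i \<in> {1..n} \<Longrightarrow> exp (- K) / real n \<le> U i \<omega>" using nb sp unfolding B2_def by force
              have nS: "\<not> supdist Fa (Vproc Fa k U n \<omega>) (\<lambda>_. 0) > m + 1" using nb sp unfolding S_def by auto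
              have "(SUP f\<in>Fa. ereal \<bar>(Tn (k n) n (Xsample F U \<omega>) f - an (k n) f * gumbel_s c p b (real (k n) / real n))
               / (gumbel_s c p b (real (k n) / real n) * sigman (k n) f) - Vstar (k n) n (\<lambda>i. U i \<omega>) f\<bar>) \<le> ereal (e / 2)"
              proof (rule SUP_least)
                fix f assume f: "f \<in> Fa"
                have VM: "\<bar>Vstar (k n) n (\<lambda>i. U i \<omega>) f\<bar> \<le> Mb"
                  using VMb[of n \<omega> "m + 1" f] Nn sp nS f Mb by force
                have "\<bar>(Tn (k n) n (\<lambda>i. exp (Ginv (\<lambda>x. F (exp x)) (1 - U i \<omega>))) f - an (k n) f * gumbel_s c p b (real (k n) / real n))
                    / (gumbel_s c p b (real (k n) / real n) * sigman (k n) f) - Vstar (k n) n (\<lambda>i. U i \<omega>) f\<bar>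
                    \<le> (10 + 6 * ln lam + 6 * K) * \<eta> * (3 + Mb)"
                  by (rule gumbel_omega[where u="\<lambda>i. U i \<omega>" and n=n and k=k and lam=lam and K=K and F=F and c=c and d=d and p=p and b=b and f=f and \<eta>=\<eta> and Mb=Mb, OF u cnt small _ _ _ lam K(1) rep Gm _ _ VM less_imp_le[OF \<eta>(1)] _ Mb(1)])
                     (use Nn f fpos \<eta> in \<open>auto simp: C_def\<close>)
                then have "\<bar>(Tn (k n) n (Xsample F U \<omega>) f - an (k n) f * gumbel_s c p b (real (k n) / real n))
                    / (gumbel_s c p b (real (k n) / real n) * sigman (k n) f) - Vstar (k n) n (\<lambda>i. U i \<omega>) f\<bar> \<le> e / 2"
                  using \<eta>e unfolding Xeq C_def by linarith
                then show "ereal \<bar>(Tn (k n) n (Xsample F U \<omega>) f - an (k n) f * gumbel_s c p b (real (k n) / real n))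
                    / (gumbel_s c p b (real (k n) / real n) * sigman (k n) f) - Vstar (k n) n (\<lambda>i. U i \<omega>) f\<bar> \<le> ereal (e / 2)"
                  by simp
              qed
              then show False using \<omega> e by (auto dest: less_le_trans)
            qed
          qed
        qed
      qed
    qed
  next
    fix \<gamma> :: real and c p b lam
    assume \<gamma>: "\<gamma> > 0" and "domain_Frechet F \<gamma>" and H: "Frechet_rep F \<gamma> c p b \<and> lam > 1 \<and> CU1 Fa k p lam \<and> CU2 Fa k b lam"
    then have rep: "Frechet_rep F \<gamma> c p b" and lam: "lam > 1" and cu1: "CU1 Fa k p lam" and cu2: "CU2 Fa k b lam" by auto
    show "conv_outer_prob M (\<lambda>n \<omega>. SUP f\<in>Fa. ereal \<bar>
             an (k n) f / sigman (k n) f * (Tn (k n) n (Xsample F U \<omega>) f / an (k n) f - \<gamma>)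
             - \<gamma> * Vstar (k n) n (\<lambda>i. U i \<omega>) f\<bar>)"
    proof (rule assemble)
      fix e \<delta> :: real assume e: "e > 0" and d: "\<delta> > 0"
      obtain m where m: "\<forall>\<^sub>F n in sequentially. outer_prob M {\<omega>\<in>space M. supdist Fa (Vproc Fa k U n \<omega>) (\<lambda>_. 0) > m + 1} < \<delta>"
        using tightness[OF P Fa_ne weak d] by blast
      define Mb where "Mb = max 0 (m + 1)"
      have Mb: "0 \<le> Mb" "m + 1 \<le> Mb" unfolding Mb_def by auto
      define \<eta> where "\<eta> = min (1 / 2) (e / (2 * (5 + Mb)))"
      have \<eta>1: "0 < \<eta>" unfolding \<eta>_def using e Mb by auto
      have \<eta>2: "\<eta> \<le> 1 / 2" unfolding \<eta>_def by (rule min.cobounded1)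
      note \<eta> = \<eta>1 \<eta>2
      have \<eta>e: "4 * \<eta> + \<eta> * Mb + \<eta> \<le> e / 2"
      proof -
        have "4 * \<eta> + \<eta> * Mb + \<eta> = \<eta> * (5 + Mb)" by (simp add: algebra_simps)
        also have "\<dots> \<le> (e / (2 * (5 + Mb))) * (5 + Mb)" using Mb unfolding \<eta>_def by (intro mult_right_mono) auto
        also have "\<dots> = e / 2" using Mb by (simp add: field_simps)
        finally show ?thesis .
      qed
      have ev: "\<forall>\<^sub>F n in sequentially. (1 \<le> n \<and> 3 \<le> k n \<and> k n + 1 \<le> n \<and> lam * real (k n) / real n < 1) \<and>
          prob {\<omega>\<in>space M. (\<Sum>i=1..n. indicator {..lam * real (k n) / real n} (U i \<omega>) :: real) \<le> real (k n)} < \<delta>/2 \<and>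
          outer_prob M {\<omega>\<in>space M. supdist Fa (Vproc Fa k U n \<omega>) (\<lambda>_. 0) > m + 1} < \<delta> \<and>
          (\<forall>f\<in>Fa. g1n p k lam n * ereal ((\<Sum>j=1..k n. f j) / sigman (k n) f) < ereal \<eta>) \<and>
          (\<forall>f\<in>Fa. g2n b k lam n * ereal ((\<Sum>j=1..k n. f j) / sigman (k n) f) < ereal \<eta>) \<and>
          (\<forall>\<omega>\<in>space M. Vproc Fa k U n \<omega> \<in> linf Fa)"
        using kn_ev[OF lam] binom_ev[OF lam d] m CU_elim[OF cu1[unfolded CU1_def] \<eta>(1)]
          CU_elim[OF cu2[unfolded CU2_def] \<eta>(1)] evlinf
        by eventually_elim blast
      then obtain N where N: "\<And>n. n \<ge> N \<Longrightarrow> (1 \<le> n \<and> 3 \<le> k n \<and> k n + 1 \<le> n \<and> lam * real (k n) / real n < 1) \<and>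
          prob {\<omega>\<in>space M. (\<Sum>i=1..n. indicator {..lam * real (k n) / real n} (U i \<omega>) :: real) \<le> real (k n)} < \<delta>/2 \<and>
          outer_prob M {\<omega>\<in>space M. supdist Fa (Vproc Fa k U n \<omega>) (\<lambda>_. 0) > m + 1} < \<delta> \<and>
          (\<forall>f\<in>Fa. g1n p k lam n * ereal ((\<Sum>j=1..k n. f j) / sigman (k n) f) < ereal \<eta>) \<and>
          (\<forall>f\<in>Fa. g2n b k lam n * ereal ((\<Sum>j=1..k n. f j) / sigman (k n) f) < ereal \<eta>) \<and>
          (\<forall>\<omega>\<in>space M. Vproc Fa k U n \<omega> \<in> linf Fa)"
        unfolding eventually_sequentially by blast
      show "\<exists>N. \<forall>n\<ge>N. \<exists>B S. B \<in> sets M \<and> measure M B < \<delta> \<and> S \<subseteq> space M \<and> outer_prob M S < \<delta> \<and>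
          {\<omega> \<in> space M. ereal e < (SUP f\<in>Fa. ereal \<bar>an (k n) f / sigman (k n) f * (Tn (k n) n (Xsample F U \<omega>) f / an (k n) f - \<gamma>)
             - \<gamma> * Vstar (k n) n (\<lambda>i. U i \<omega>) f\<bar>)} \<subseteq> B \<union> S"
      proof (rule exI[of _ N], intro allI impI)
        fix n assume "N \<le> n"
        note Nn = N[OF this]
        define B0 where "B0 = {\<omega>\<in>space M. \<exists>i\<in>{1..n}. U i \<omega> \<notin> {0<..<1}}"
        define B1 where "B1 = {\<omega>\<in>space M. (\<Sum>i=1..n. indicator {..lam * real (k n) / real n} (U i \<omega>) :: real) \<le> real (k n)}"
        define S where "S = {\<omega>\<in>space M. supdist Fa (Vproc Fa k U n \<omega>) (\<lambda>_. 0) > m + 1}"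
        have sets: "B0 \<in> events" "B1 \<in> events" unfolding B0_def B1_def by (rule sets_some_small)+
        show "\<exists>B S. B \<in> sets M \<and> measure M B < \<delta> \<and> S \<subseteq> space M \<and> outer_prob M S < \<delta> \<and>
          {\<omega> \<in> space M. ereal e < (SUP f\<in>Fa. ereal \<bar>an (k n) f / sigman (k n) f * (Tn (k n) n (Xsample F U \<omega>) f / an (k n) f - \<gamma>)
             - \<gamma> * Vstar (k n) n (\<lambda>i. U i \<omega>) f\<bar>)} \<subseteq> B \<union> S"
        proof (intro exI conjI)
          show "B0 \<union> B1 \<in> sets M" using sets by auto
          have "prob (B0 \<union> B1) \<le> prob B0 + prob B1" using sets by (intro measure_Un_le) auto
          also have "\<dots> < \<delta>" using B0m[of n] Nn d unfolding B0_def B1_def by auto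
          finally show "prob (B0 \<union> B1) < \<delta>" .
          show "S \<subseteq> space M" unfolding S_def by auto
          show "outer_prob M S < \<delta>" using Nn unfolding S_def by auto
          show "{\<omega> \<in> space M. ereal e < (SUP f\<in>Fa. ereal \<bar>an (k n) f / sigman (k n) f * (Tn (k n) n (Xsample F U \<omega>) f / an (k n) f - \<gamma>)
             - \<gamma> * Vstar (k n) n (\<lambda>i. U i \<omega>) f\<bar>)} \<subseteq> B0 \<union> B1 \<union> S"
          proof
            fix \<omega> assume \<omega>: "\<omega> \<in> {\<omega> \<in> space M. ereal e < (SUP f\<in>Fa. ereal \<bar>an (k n) f / sigman (k n) f * (Tn (k n) n (Xsample F U \<omega>) f / an (k n) f - \<gamma>)
             - \<gamma> * Vstar (k n) n (\<lambda>i. U i \<omega>) f\<bar>)}"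
            show "\<omega> \<in> B0 \<union> B1 \<union> S"
            proof (rule ccontr)
              assume nb: "\<omega> \<notin> B0 \<union> B1 \<union> S"
              have sp: "\<omega> \<in> space M" using \<omega> by auto
              have u: "\<And>i. i \<in> {1..n} \<Longrightarrow> U i \<omega> \<in> {0<..<1}" using nb sp unfolding B0_def by auto
              have cnt: "\<not> (\<Sum>i=1..n. indicator {..lam * real (k n) / real n} (U i \<omega>) :: real) \<le> real (k n)"
                using nb sp unfolding B1_def by auto
              have nS: "\<not> supdist Fa (Vproc Fa k U n \<omega>) (\<lambda>_. 0) > m + 1" using nb sp unfolding S_def by auto
              have "(SUP f\<in>Fa. ereal \<bar>an (k n) f / sigman (k n) f * (Tn (k n) n (Xsample F U \<omega>) f / an (k n) f - \<gamma>)
                 - \<gamma> * Vstar (k n) n (\<lambda>i. U i \<omega>) f\<bar>) \<le> ereal (e / 2)"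
              proof (rule SUP_least)
                fix f assume f: "f \<in> Fa"
                have VM: "\<bar>Vstar (k n) n (\<lambda>i. U i \<omega>) f\<bar> \<le> Mb"
                  using VMb[of n \<omega> "m + 1" f] Nn sp nS f Mb by force
                have "\<bar>an (k n) f / sigman (k n) f * (Tn (k n) n (\<lambda>i. exp (Ginv (\<lambda>x. F (exp x)) (1 - U i \<omega>))) f / an (k n) f - \<gamma>)
                    - \<gamma> * Vstar (k n) n (\<lambda>i. U i \<omega>) f\<bar> \<le> 4 * \<eta> + \<eta> * Mb + \<eta>"
                  by (rule frechet_omega[where u="\<lambda>i. U i \<omega>" and n=n and k=k and lam=lam and F=F and c=c and p=p and b=b and f=f and \<eta>=\<eta> and Mb=Mb and \<gamma>=\<gamma>, OF u cnt _ _ _ lam rep \<gamma> Gm _ _ _ VM less_imp_le[OF \<eta>(1)] \<eta>(2) Mb(1)])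
                     (use Nn f fpos in auto)
                then show "ereal \<bar>an (k n) f / sigman (k n) f * (Tn (k n) n (Xsample F U \<omega>) f / an (k n) f - \<gamma>)
                    - \<gamma> * Vstar (k n) n (\<lambda>i. U i \<omega>) f\<bar> \<le> ereal (e / 2)"
                  using \<eta>e unfolding Xeq by simp
              qed
              then show False using \<omega> e by (auto dest: less_le_trans)
            qed
          qed
        qed
      qed
    qed
  qed
qed


end
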